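(* Let $\overrightarrow{W}$ be a Morse sequence on a simplicial complex $K$. Then for every $p$: (1) the homology spaces $H_p(K)$ and $H_p(\widehat W)$ are isomorphic vector spaces over $\mathbb{Z}_2$; (2) the cohomology spaces $H^p(K)$ and $H^p(\widehat W)$ are isomorphic vector spaces over $\mathbb{Z}_2$.
   Context: A simplicial complex $K$ is a finite collection of non-empty finite sets closed under taking non-empty subsets; $\dim\sigma=|\sigma|-1$, $K^{(p)}$ the set of $p$-simplices. A pair $(\sigma,\tau)$ with $\sigma\subsetneq\tau$ is a free pair for $K$ if $\tau$ is the only simplex other than $\sigma$ containing $\sigma$; $K$ is then an elementary expansion of $K\setminus\{\sigma,\tau\}$. If $\nu$ is a facet (maximal simplex) of $K$, $K$ is an elementary filling of $K\setminus\{\nu\}$. A Morse sequence on $K$ is a sequence $\langle\emptyset=K_0,\dots,K_k=K\rangle$ with each $K_i$ an elementary expansion or filling of $K_{i-1}$; simplices added by fillings are critical; for an expansion $K_i=K_{i-1}\cup\{\sigma,\tau\}$, $\sigma\subset\tau$, $\sigma$ is lower regular and $\tau$ upper regular. $\widehat W$ is the set of critical simplices. $K[p]$ is the $\mathbb{Z}_2$-vector space of subsets of $K^{(p)}$ (sum = symmetric difference, $0=\emptyset$), $\widehat W[p]=\{c\in K[p]:c\subseteq\widehat W\}$. For $\sigma\in K^{(p)}$, $\partial(\sigma)=\{\tau\in K^{(p-1)}:\tau\subset\sigma\}$, $\delta(\sigma)=\{\tau\in K^{(p+1)}:\sigma\subset\tau\}$, with linear extensions $\partial_p,\delta_p$;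 $H_p(K)=\ker\partial_p/\operatorname{im}\partial_{p+1}$ and $H^p(K)=\ker\delta_p/\operatorname{im}\delta_{p-1}$ (mod 2 simplicial homology and cohomology). The reference map $\curlywedge$ is the unique map assigning to each $p$-simplex an element of $\widehat W[p]$, extended linearly, with $\curlywedge(\nu)=\{\nu\}$ for critical $\nu$ and $\curlywedge(\tau)=0=\curlywedge(\partial(\tau))$ for upper regular $\tau$; the coreference map $\curlyvee$ is the unique such map with $\curlyvee(\nu)=\{\nu\}$ for critical $\nu$ and $\curlyvee(\sigma)=0=\curlyvee(\delta(\sigma))$ for lower regular $\sigma$. The critical complex is the chain complex $(\widehat W[p],\widehat\partial_p)$ with $\widehat\partial_p(c)=\curlywedge(\partial_p(c))$, and the cocritical complex is the cochain complex $(\widehat W[p],\widehat\delta_p)$ with $\widehat\delta_p(c)=\curlyvee(\delta_p(c))$ (these satisfy $\widehat\partial\circ\widehat\partial=0$ and $\widehat\delta\circ\widehat\delta=0$). $H_p(\widehat W)=\ker\widehat\partial_p/\operatorname{im}\widehat\partial_{p+1}$ and $H^p(\widehat W)=\ker\widehat\delta_p/\operatorname{im}\widehat\delta_{p-1}$. *)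

theory Defs
  imports Main
begin

text \<open>A p-simplex is a simplex of cardinality p+1.  Chains over Z_2 are sets of simplices,
  addition is symmetric difference, zero is the empty set.\<close>

definition simplicial_complex :: "'a set set \<Rightarrow> bool" where
  "simplicial_complex K \<longleftrightarrow> finite K \<and> (\<forall>\<sigma>\<in>K. finite \<sigma> \<and> \<sigma> \<noteq> {}) \<and>
     (\<forall>\<sigma>\<in>K. \<forall>\<tau>. \<tau> \<subseteq> \<sigma> \<and> \<tau> \<noteq> {} \<longrightarrow> \<tau> \<in> K)"

definition Kcard :: "'a set set \<Rightarrow> nat \<Rightarrow> 'a set set" where
  "Kcard K n = {\<sigma>\<in>K. card \<sigma> = n}"

definition free_pair :: "'a set set \<Rightarrow> 'a set \<Rightarrow> 'a set \<Rightarrow> bool" where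
  "free_pair K \<sigma> \<tau> \<longleftrightarrow> \<sigma> \<in> K \<and> \<tau> \<in> K \<and> \<sigma> \<subset> \<tau> \<and> (\<forall>\<rho>\<in>K. \<sigma> \<subseteq> \<rho> \<longrightarrow> \<rho> = \<sigma> \<or> \<rho> = \<tau>)"

definition facet :: "'a set set \<Rightarrow> 'a set \<Rightarrow> bool" where
  "facet K \<nu> \<longleftrightarrow> \<nu> \<in> K \<and> (\<forall>\<rho>\<in>K. \<nu> \<subseteq> \<rho> \<longrightarrow> \<rho> = \<nu>)"

definition elem_expansion :: "'a set set \<Rightarrow> 'a set set \<Rightarrow> bool" where
  "elem_expansion K' K \<longleftrightarrow> (\<exists>\<sigma> \<tau>. free_pair K \<sigma> \<tau> \<and> K' = K - {\<sigma>, \<tau>})"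

definition elem_filling :: "'a set set \<Rightarrow> 'a set set \<Rightarrow> bool" where
  "elem_filling K' K \<longleftrightarrow> (\<exists>\<nu>. facet K \<nu> \<and> K' = K - {\<nu>})"

definition morse_seq :: "'a set set \<Rightarrow> 'a set set list \<Rightarrow> bool" where
  "morse_seq K W \<longleftrightarrow> W \<noteq> [] \<and> W ! 0 = {} \<and> last W = K \<and>
     (\<forall>i. Suc i < length W \<longrightarrow> elem_expansion (W ! i) (W ! Suc i) \<or> elem_filling (W ! i) (W ! Suc i))"

definition critical :: "'a set set list \<Rightarrow> 'a set set" where
  "critical W = {\<nu>. \<exists>i. Suc i < length W \<and> W ! Suc i - W ! i = {\<nu>}}"

definition upper_regular :: "'a set set list \<Rightarrow> 'a set set" where
  "upper_regular W = {\<tau>. \<exists>i \<sigma>. Suc i < length W \<and> \<sigma> \<subset> \<tau> \<and> W ! Suc i - W ! i = {\<sigma>, \<tau>}}"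

definition lower_regular :: "'a set set list \<Rightarrow> 'a set set" where
  "lower_regular W = {\<sigma>. \<exists>i \<tau>. Suc i < length W \<and> \<sigma> \<subset> \<tau> \<and> W ! Suc i - W ! i = {\<sigma>, \<tau>}}"

text \<open>Linear (Z_2) extension of a map from simplices to chains.\<close>
definition lin :: "('b \<Rightarrow> 'c set) \<Rightarrow> 'b set \<Rightarrow> 'c set" where
  "lin r c = {x. odd (card {\<sigma>\<in>c. x \<in> r \<sigma>})}"

definition bd1 :: "'a set set \<Rightarrow> 'a set \<Rightarrow> 'a set set" where
  "bd1 K \<sigma> = {\<tau>\<in>K. \<tau> \<subset> \<sigma> \<and> card \<tau> + 1 = card \<sigma>}"

definition cobd1 :: "'a set set \<Rightarrow> 'a set \<Rightarrow> 'a set set" where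
  "cobd1 K \<sigma> = {\<tau>\<in>K. \<sigma> \<subset> \<tau> \<and> card \<tau> = card \<sigma> + 1}"

definition bd :: "'a set set \<Rightarrow> 'a set set \<Rightarrow> 'a set set" where
  "bd K c = lin (bd1 K) c"

definition cobd :: "'a set set \<Rightarrow> 'a set set \<Rightarrow> 'a set set" where
  "cobd K c = lin (cobd1 K) c"

text \<open>Reference and coreference maps (defined as the unique maps with the stated properties;
  outside K they are set to 0 to make them unique as HOL functions).\<close>
definition is_ref :: "'a set set \<Rightarrow> 'a set set list \<Rightarrow> ('a set \<Rightarrow> 'a set set) \<Rightarrow> bool" where
  "is_ref K W r \<longleftrightarrow> (\<forall>\<sigma>. \<sigma> \<notin> K \<longrightarrow> r \<sigma> = {}) \<and>
     (\<forall>\<sigma>\<in>K. r \<sigma> \<subseteq> critical W \<inter> Kcard K (card \<sigma>)) \<and>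
     (\<forall>\<nu>\<in>critical W. r \<nu> = {\<nu>}) \<and>
     (\<forall>\<tau>\<in>upper_regular W. r \<tau> = {} \<and> lin r (bd1 K \<tau>) = {})"

definition reference :: "'a set set \<Rightarrow> 'a set set list \<Rightarrow> 'a set \<Rightarrow> 'a set set" where
  "reference K W = (THE r. is_ref K W r)"

definition is_coref :: "'a set set \<Rightarrow> 'a set set list \<Rightarrow> ('a set \<Rightarrow> 'a set set) \<Rightarrow> bool" where
  "is_coref K W r \<longleftrightarrow> (\<forall>\<sigma>. \<sigma> \<notin> K \<longrightarrow> r \<sigma> = {}) \<and>
     (\<forall>\<sigma>\<in>K. r \<sigma> \<subseteq> critical W \<inter> Kcard K (card \<sigma>)) \<and>
     (\<forall>\<nu>\<in>critical W. r \<nu> = {\<nu>}) \<and>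
     (\<forall>\<sigma>\<in>lower_regular W. r \<sigma> = {} \<and> lin r (cobd1 K \<sigma>) = {})"

definition coreference :: "'a set set \<Rightarrow> 'a set set list \<Rightarrow> 'a set \<Rightarrow> 'a set set" where
  "coreference K W = (THE r. is_coref K W r)"

definition crit_bd :: "'a set set \<Rightarrow> 'a set set list \<Rightarrow> 'a set set \<Rightarrow> 'a set set" where
  "crit_bd K W c = lin (reference K W) (bd K c)"

definition crit_cobd :: "'a set set \<Rightarrow> 'a set set list \<Rightarrow> 'a set set \<Rightarrow> 'a set set" where
  "crit_cobd K W c = lin (coreference K W) (cobd K c)"

text \<open>Quotient Z/B of Z_2-spaces of chains, as the set of cosets z + B.\<close>
definition quot_space :: "'b set set \<Rightarrow> 'b set set \<Rightarrow> 'b set set set" where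
  "quot_space Z B = {{z \<union> b - (z \<inter> b) | b. b \<in> B} | z. z \<in> Z}"

definition coset_add :: "'b set set \<Rightarrow> 'b set set \<Rightarrow> 'b set set" where
  "coset_add A B = {x \<union> y - (x \<inter> y) | x y. x \<in> A \<and> y \<in> B}"

text \<open>Isomorphism of Z_2-vector spaces = additive bijection (scalars are 0 and 1).\<close>
definition vs_iso :: "'b set set set \<Rightarrow> 'c set set set \<Rightarrow> bool" where
  "vs_iso H1 H2 \<longleftrightarrow> (\<exists>f. bij_betw f H1 H2 \<and>
     (\<forall>A\<in>H1. \<forall>B\<in>H1. f (coset_add A B) = coset_add (f A) (f B)))"

definition homology :: "'a set set \<Rightarrow> nat \<Rightarrow> 'a set set set set" where
  "homology K p = quot_space {c \<in> Pow (Kcard K (p+1)). bd K c = {}} (bd K ` Pow (Kcard K (p+2)))"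

definition cohomology :: "'a set set \<Rightarrow> nat \<Rightarrow> 'a set set set set" where
  "cohomology K p = quot_space {c \<in> Pow (Kcard K (p+1)). cobd K c = {}} (cobd K ` Pow (Kcard K p))"

definition crit_homology :: "'a set set \<Rightarrow> 'a set set list \<Rightarrow> nat \<Rightarrow> 'a set set set set" where
  "crit_homology K W p = quot_space
     {c \<in> Pow (critical W \<inter> Kcard K (p+1)). crit_bd K W c = {}}
     (crit_bd K W ` Pow (critical W \<inter> Kcard K (p+2)))"

definition crit_cohomology :: "'a set set \<Rightarrow> 'a set set list \<Rightarrow> nat \<Rightarrow> 'a set set set set" where
  "crit_cohomology K W p = quot_space
     {c \<in> Pow (critical W \<inter> Kcard K (p+1)). crit_cobd K W c = {}}
     (crit_cobd K W ` Pow (critical W \<inter> Kcard K p))"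

end

theory Submission
  imports Defs
begin


abbreviation sd :: "'b set \<Rightarrow> 'b set \<Rightarrow> 'b set" where
  "sd x y \<equiv> x \<union> y - (x \<inter> y)"

lemma sd_assoc: "sd (sd x y) z = sd x (sd y z)" by blast
lemma sd_comm: "sd x y = sd y x" by blast
lemma sd_self[simp]: "sd x x = {}" by blast
lemma sd_empty[simp]: "sd x {} = x" "sd {} x = x" by blast+
lemma sd_eq_empty: "sd x y = {} \<longleftrightarrow> x = y" by blast

lemma card_sd:
  assumes "finite X" "finite Y"
  shows "card (sd X Y) + 2 * card (X \<inter> Y) = card X + card Y"
proof -
  have "card (X \<union> Y) + card (X \<inter> Y) = card X + card Y"
    using card_Un_Int[OF assms] by simp
  moreover have "card (sd X Y) = card (X \<union> Y) - card (X \<inter> Y)"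
    using assms by (intro card_Diff_subset) auto
  moreover have "card (X \<inter> Y) \<le> card (X \<union> Y)"
    using assms by (intro card_mono) auto
  ultimately show ?thesis by simp
qed

lemma odd_card_sd:
  assumes "finite X" "finite Y"
  shows "odd (card (sd X Y)) \<longleftrightarrow> (odd (card X) \<noteq> odd (card Y))"
proof -
  have "card (sd X Y) + 2 * card (X \<inter> Y) = card X + card Y" by (rule card_sd[OF assms])
  then show ?thesis by (metis even_add even_mult_iff even_numeral)
qed

lemma lin_empty[simp]: "lin r {} = {}" by (simp add: lin_def)

lemma lin_sd:
  assumes "finite x" "finite y"
  shows "lin r (sd x y) = sd (lin r x) (lin r y)"
proof -
  have "\<And>a. {\<sigma>\<in>sd x y. a \<in> r \<sigma>} = sd {\<sigma>\<in>x. a \<in> r \<sigma>} {\<sigma>\<in>y. a \<in> r \<sigma>}" by blast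
  then show ?thesis using assms unfolding lin_def
    by (auto simp: odd_card_sd)
qed

lemma lin_single[simp]: "lin r {a} = r a"
proof -
  have "\<And>x. {\<sigma>\<in>{a}. x \<in> r \<sigma>} = (if x \<in> r a then {a} else {})" by auto
  then show ?thesis unfolding lin_def by auto
qed

lemma lin_insert:
  assumes "finite F" "a \<notin> F"
  shows "lin r (insert a F) = sd (r a) (lin r F)"
proof -
  have "insert a F = sd {a} F" using assms by auto
  then show ?thesis using lin_sd[of "{a}" F r] assms by simp
qed

lemma lin_cong:
  assumes "\<And>s. s \<in> F \<Longrightarrow> r s = q s" shows "lin r F = lin q F"
proof -
  have "\<And>x. {\<sigma>\<in>F. x \<in> r \<sigma>} = {\<sigma>\<in>F. x \<in> q \<sigma>}" using assms by auto
  then show ?thesis unfolding lin_def by simp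
qed

lemma lin_zero:
  assumes "\<And>s. s \<in> F \<Longrightarrow> r s = {}" shows "lin r F = {}"
proof -
  have "\<And>x. {\<sigma>\<in>F. x \<in> r \<sigma>} = {}" using assms by auto
  then show ?thesis unfolding lin_def by (simp only:) simp
qed

lemma lin_subset: "lin r F \<subseteq> (\<Union>s\<in>F. r s)"
proof
  fix x assume "x \<in> lin r F"
  then have "odd (card {\<sigma>\<in>F. x \<in> r \<sigma>})" by (simp add: lin_def)
  then have "{\<sigma>\<in>F. x \<in> r \<sigma>} \<noteq> {}" by (metis card.empty even_zero)
  then show "x \<in> (\<Union>s\<in>F. r s)" by blast
qed

lemma lin_fun_sd:
  assumes "finite F"
  shows "lin (\<lambda>s. sd (r s) (q s)) F = sd (lin r F) (lin q F)"
  using assms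
proof (induction F rule: finite_induct)
  case empty then show ?case by simp
next
  case (insert a F)
  then show ?case by (simp add: lin_insert) blast
qed

lemma lin_id:
  assumes "finite F" shows "lin (\<lambda>s. {s}) F = F"
  using assms by (induction F rule: finite_induct) (auto simp: lin_insert)

lemma lin_lin:
  assumes "finite B" "\<And>b. b \<in> B \<Longrightarrow> finite (h b)"
  shows "lin f (lin h B) = lin (\<lambda>b. lin f (h b)) B"
  using assms
proof (induction B rule: finite_induct)
  case empty then show ?case by simp
next
  case (insert a F)
  have fin: "finite (lin h F)"
    by (rule finite_subset[OF lin_subset]) (use insert in auto)
  show ?case using insert fin by (simp add: lin_insert lin_sd)
qed

lemma lin_closed:
  assumes "finite F" "{} \<in> N" "\<And>x y. x \<in> N \<Longrightarrow> y \<in> N \<Longrightarrow> sd x y \<in> N"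
    "\<And>s. s \<in> F \<Longrightarrow> h s \<in> N"
  shows "lin h F \<in> N"
  using assms(1,4)
proof (induction F rule: finite_induct)
  case empty then show ?case using assms(2) by simp
next
  case (insert a F)
  then show ?case using assms(3) by (simp add: lin_insert)
qed



definition cos :: "'b set set \<Rightarrow> 'b set \<Rightarrow> 'b set set" where
  "cos B z = {sd z b | b. b \<in> B}"

definition subgrp :: "'b set set \<Rightarrow> bool" where
  "subgrp B \<longleftrightarrow> {} \<in> B \<and> (\<forall>x\<in>B. \<forall>y\<in>B. sd x y \<in> B)"

lemma quot_space_cos: "quot_space Z B = cos B ` Z"
  unfolding quot_space_def cos_def by auto

lemma cos_eq:
  assumes "subgrp B"
  shows "cos B z = cos B z' \<longleftrightarrow> sd z z' \<in> B"
proof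
  assume "cos B z = cos B z'"
  moreover have "z \<in> cos B z" using assms unfolding cos_def subgrp_def by force
  ultimately obtain b where "b \<in> B" "z = sd z' b" unfolding cos_def by auto
  then have "sd z z' = b" by blast
  then show "sd z z' \<in> B" using \<open>b \<in> B\<close> by simp
next
  assume h: "sd z z' \<in> B"
  have "cos B z \<subseteq> cos B z'" if "sd z z' \<in> B" for z z'
  proof
    fix w assume "w \<in> cos B z"
    then obtain b where b: "b \<in> B" "w = sd z b" unfolding cos_def by auto
    then have "w = sd z' (sd (sd z z') b)" by blast
    moreover have "sd (sd z z') b \<in> B" using assms that b unfolding subgrp_def by blast
    ultimately show "w \<in> cos B z'" unfolding cos_def by blast
  qed
  moreover have "sd z' z \<in> B" using h by (simp add: sd_comm)
  ultimately show "cos B z = cos B z'" using h by blast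
qed

lemma coset_add_cos:
  assumes "subgrp B"
  shows "coset_add (cos B z) (cos B z') = cos B (sd z z')"
proof
  show "coset_add (cos B z) (cos B z') \<subseteq> cos B (sd z z')"
  proof
    fix w assume "w \<in> coset_add (cos B z) (cos B z')"
    then obtain b b' where bb: "b \<in> B" "b' \<in> B" "w = sd (sd z b) (sd z' b')"
      unfolding coset_add_def cos_def by blast
    then have "w = sd (sd z z') (sd b b')" by blast
    moreover have "sd b b' \<in> B" using assms bb unfolding subgrp_def by blast
    ultimately show "w \<in> cos B (sd z z')" unfolding cos_def by blast
  qed
next
  show "cos B (sd z z') \<subseteq> coset_add (cos B z) (cos B z')"
  proof
    fix w assume "w \<in> cos B (sd z z')"
    then obtain b where b: "b \<in> B" "w = sd (sd z z') b" unfolding cos_def by blast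
    have "sd z b \<in> cos B z" using b unfolding cos_def by blast
    moreover have "z' \<in> cos B z'" using assms unfolding cos_def subgrp_def by force
    moreover have "w = sd (sd z b) z'" using b by blast
    ultimately show "w \<in> coset_add (cos B z) (cos B z')" unfolding coset_add_def by blast
  qed
qed

lemma quot_iso:
  assumes sB: "subgrp B" and sBh: "subgrp Bh" and sZ: "subgrp Z"
    and BZ: "B \<subseteq> Z"
    and phiZ: "\<And>z. z \<in> Z \<Longrightarrow> \<phi> z \<in> Zh"
    and phil: "\<And>x y. x \<in> Z \<Longrightarrow> y \<in> Z \<Longrightarrow> \<phi> (sd x y) = sd (\<phi> x) (\<phi> y)"
    and phiB: "\<And>b. b \<in> B \<Longrightarrow> \<phi> b \<in> Bh"
    and surj: "\<And>zh. zh \<in> Zh \<Longrightarrow> \<exists>z\<in>Z. \<phi> z = zh"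
    and inj: "\<And>z. z \<in> Z \<Longrightarrow> \<phi> z \<in> Bh \<Longrightarrow> z \<in> B"
  shows "vs_iso (quot_space Z B) (quot_space Zh Bh)"
proof -
  define f where "f A = cos Bh (\<phi> (SOME z. z \<in> Z \<and> A = cos B z))" for A
  have fcos: "f (cos B z) = cos Bh (\<phi> z)" if "z \<in> Z" for z
  proof -
    let ?z = "SOME z'. z' \<in> Z \<and> cos B z = cos B z'"
    have "?z \<in> Z \<and> cos B z = cos B ?z" by (rule someI[of _ z]) (use that in simp)
    then have z: "?z \<in> Z" "sd z ?z \<in> B" using cos_eq[OF sB] by auto
    then have "\<phi> (sd z ?z) \<in> Bh" using phiB by blast
    then have "sd (\<phi> z) (\<phi> ?z) \<in> Bh" using phil z that by simp
    then have "cos Bh (\<phi> ?z) = cos Bh (\<phi> z)" using cos_eq[OF sBh] by (simp add: sd_comm)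
    then show ?thesis unfolding f_def by simp
  qed
  show ?thesis unfolding vs_iso_def quot_space_cos
  proof (intro exI conjI ballI)
    show "bij_betw f (cos B ` Z) (cos Bh ` Zh)"
      unfolding bij_betw_def
    proof
      show "inj_on f (cos B ` Z)"
      proof (rule inj_onI, clarify)
        fix x y assume xy: "x \<in> Z" "y \<in> Z" "f (cos B x) = f (cos B y)"
        then have "cos Bh (\<phi> x) = cos Bh (\<phi> y)" using fcos by simp
        then have "sd (\<phi> x) (\<phi> y) \<in> Bh" using cos_eq[OF sBh] by simp
        then have "\<phi> (sd x y) \<in> Bh" using phil xy by simp
        moreover have "sd x y \<in> Z" using sZ xy unfolding subgrp_def by blast
        ultimately have "sd x y \<in> B" using inj by blast
        then show "cos B x = cos B y" using cos_eq[OF sB] by simp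
      qed
      show "f ` cos B ` Z = cos Bh ` Zh"
      proof
        show "f ` cos B ` Z \<subseteq> cos Bh ` Zh" using fcos phiZ by auto
        show "cos Bh ` Zh \<subseteq> f ` cos B ` Z"
        proof
          fix w assume "w \<in> cos Bh ` Zh"
          then obtain zh where "zh \<in> Zh" "w = cos Bh zh" by blast
          then obtain z where "z \<in> Z" "\<phi> z = zh" using surj by blast
          then show "w \<in> f ` cos B ` Z" using fcos \<open>w = cos Bh zh\<close> by force
        qed
      qed
    qed
  next
    fix A A' assume "A \<in> cos B ` Z" "A' \<in> cos B ` Z"
    then obtain x y where xy: "x \<in> Z" "y \<in> Z" "A = cos B x" "A' = cos B y" by blast
    have "sd x y \<in> Z" using sZ xy unfolding subgrp_def by blast
    then show "f (coset_add A A') = coset_add (f A) (f A')"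
      using xy fcos phil coset_add_cos[OF sB] coset_add_cos[OF sBh] by simp
  qed
qed



definition is_aref :: "'b set \<Rightarrow> 'b set \<Rightarrow> 'b set \<Rightarrow> ('b \<Rightarrow> 'b set) \<Rightarrow> ('b \<Rightarrow> nat) \<Rightarrow> ('b \<Rightarrow> 'b set) \<Rightarrow> bool" where
  "is_aref S Cr Up d1 g r \<longleftrightarrow> (\<forall>s. s \<notin> S \<longrightarrow> r s = {}) \<and> (\<forall>s\<in>S. r s \<subseteq> {c\<in>Cr. g c = g s}) \<and>
     (\<forall>\<nu>\<in>Cr. r \<nu> = {\<nu>}) \<and> (\<forall>\<tau>\<in>Up. r \<tau> = {} \<and> lin r (d1 \<tau>) = {})"

locale morse_abs =
  fixes S :: "'b set" and d1 :: "'b \<Rightarrow> 'b set" and g :: "'b \<Rightarrow> nat" and idx :: "'b \<Rightarrow> nat"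
    and Cr Lo Up :: "'b set" and mate :: "'b \<Rightarrow> 'b"
  assumes finS: "finite S"
  and d1_sub: "s \<in> S \<Longrightarrow> d1 s \<subseteq> S"
  and d1_deg: "s \<in> S \<Longrightarrow> t \<in> d1 s \<Longrightarrow> g s = Suc (g t)"
  and dd: "s \<in> S \<Longrightarrow> lin d1 (d1 s) = {}"
  and part: "S = Cr \<union> Lo \<union> Up"
  and disj1: "Cr \<inter> Lo = {}" and disj2: "Cr \<inter> Up = {}" and disj3: "Lo \<inter> Up = {}"
  and mate_Up: "\<tau> \<in> Up \<Longrightarrow> mate \<tau> \<in> Lo \<and> mate \<tau> \<in> d1 \<tau> \<and> mate (mate \<tau>) = \<tau>"
  and mate_Lo: "\<sigma> \<in> Lo \<Longrightarrow> mate \<sigma> \<in> Up \<and> mate (mate \<sigma>) = \<sigma>"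
  and A4: "\<tau> \<in> Up \<Longrightarrow> \<rho> \<in> d1 \<tau> \<Longrightarrow> \<rho> \<noteq> mate \<tau> \<Longrightarrow> idx \<rho> < idx (mate \<tau>)"
  and A5: "\<tau> \<in> Up \<Longrightarrow> \<tau>' \<in> Up \<Longrightarrow> mate \<tau> \<in> d1 \<tau>' \<Longrightarrow> \<tau>' = \<tau> \<or> idx \<tau> < idx \<tau>'"
begin

lemma fin_d1: "s \<in> S \<Longrightarrow> finite (d1 s)"
  using d1_sub finS finite_subset by blast

lemma fin_sub: "x \<subseteq> S \<Longrightarrow> finite x"
  using finS finite_subset by blast

lemma d_sub: "x \<subseteq> S \<Longrightarrow> lin d1 x \<subseteq> S"
  using lin_subset[of d1 x] d1_sub by blast

lemma d_deg: "x \<subseteq> S \<Longrightarrow> (\<forall>s\<in>x. g s = Suc n) \<Longrightarrow> t \<in> lin d1 x \<Longrightarrow> g t = n"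
  using lin_subset[of d1 x] d1_deg by fastforce

lemma d_deg0: "x \<subseteq> S \<Longrightarrow> (\<forall>s\<in>x. g s = 0) \<Longrightarrow> lin d1 x = {}"
  by (rule lin_zero) (use d1_deg in fastforce)

lemma lo_eq:
  assumes "is_aref S Cr Up d1 g r" "\<sigma> \<in> Lo"
  shows "r \<sigma> = lin r (d1 (mate \<sigma>) - {\<sigma>})"
proof -
  let ?t = "mate \<sigma>"
  have t: "?t \<in> Up" "mate ?t = \<sigma>" using mate_Lo assms(2) by auto
  then have s: "\<sigma> \<in> d1 ?t" using mate_Up by metis
  have tS: "?t \<in> S" using t part by blast
  have "d1 ?t = insert \<sigma> (d1 ?t - {\<sigma>})" using s by blast
  then have "lin r (d1 ?t) = sd (r \<sigma>) (lin r (d1 ?t - {\<sigma>}))"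
    using lin_insert[of "d1 ?t - {\<sigma>}" \<sigma> r] fin_d1[OF tS] by simp
  moreover have "lin r (d1 ?t) = {}" using assms(1) t unfolding is_aref_def by blast
  ultimately show ?thesis by blast
qed

lemma aref_unique:
  assumes "is_aref S Cr Up d1 g r" "is_aref S Cr Up d1 g r'"
  shows "r = r'"
proof -
  have "r s = r' s" if "s \<in> S" for s
    using that
  proof (induction "idx s" arbitrary: s rule: less_induct)
    case less
    consider "s \<in> Cr" | "s \<in> Lo" | "s \<in> Up" using less.prems part by blast
    then show ?case
    proof cases
      case 1 then show ?thesis using assms unfolding is_aref_def by auto
    next
      case 3 then show ?thesis using assms unfolding is_aref_def by auto
    next
      case 2
      let ?t = "mate s"
      have t: "?t \<in> Up" "mate ?t = s" using mate_Lo 2 by auto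
      have tS: "?t \<in> S" using t part by blast
      have "lin r (d1 ?t - {s}) = lin r' (d1 ?t - {s})"
      proof (rule lin_cong)
        fix \<rho> assume "\<rho> \<in> d1 ?t - {s}"
        then have "idx \<rho> < idx s" "\<rho> \<in> S" using A4[OF t(1)] t(2) d1_sub[OF tS] by auto
        then show "r \<rho> = r' \<rho>" using less.hyps by blast
      qed
      then show ?thesis using lo_eq[OF assms(1) 2] lo_eq[OF assms(2) 2] by simp
    qed
  qed
  moreover have "r s = r' s" if "s \<notin> S" for s using that assms unfolding is_aref_def by auto
  ultimately show ?thesis by blast
qed

definition Inv :: "nat \<Rightarrow> ('b \<Rightarrow> 'b set) \<Rightarrow> bool" where
  "Inv n r \<longleftrightarrow> (\<forall>s\<in>S. idx s < n \<longrightarrow> (s \<in> Cr \<longrightarrow> r s = {s}) \<and> (s \<in> Up \<longrightarrow> r s = {}) \<and>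
      (s \<in> Lo \<longrightarrow> r s = lin r (d1 (mate s) - {s})) \<and> r s \<subseteq> {c\<in>Cr. g c = g s})"

lemma lo_facts:
  assumes "s \<in> Lo" "\<rho> \<in> d1 (mate s) - {s}"
  shows "idx \<rho> < idx s" "\<rho> \<in> S" "g \<rho> = g s"
proof -
  have t: "mate s \<in> Up" "mate (mate s) = s" using mate_Lo assms(1) by auto
  have tS: "mate s \<in> S" using t part by blast
  have "s \<in> d1 (mate s)" using mate_Up[OF t(1)] t(2) by metis
  then have "g (mate s) = Suc (g s)" using d1_deg[OF tS] by blast
  moreover have "g (mate s) = Suc (g \<rho>)" using d1_deg[OF tS] assms(2) by blast
  ultimately show "g \<rho> = g s" by simp
  show "idx \<rho> < idx s" "\<rho> \<in> S"
    using A4[OF t(1)] t(2) d1_sub[OF tS] assms(2) by auto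
qed

lemma Inv_step:
  assumes "Inv n r"
  shows "\<exists>r'. Inv (Suc n) r'"
proof -
  define r' where "r' s = (if idx s = n then (if s \<in> Cr then {s} else if s \<in> Lo then lin r (d1 (mate s) - {s}) else {}) else r s)" for s
  have eq: "lin r' (d1 (mate s) - {s}) = lin r (d1 (mate s) - {s})" if "s \<in> Lo" "idx s \<le> n" for s
  proof (rule lin_cong)
    fix \<rho> assume "\<rho> \<in> d1 (mate s) - {s}"
    then have "idx \<rho> \<noteq> n" using lo_facts(1)[OF that(1)] that(2) by fastforce
    then show "r' \<rho> = r \<rho>" by (simp add: r'_def)
  qed
  have "Inv (Suc n) r'" unfolding Inv_def
  proof (intro ballI impI)
    fix s assume sS: "s \<in> S" and lt: "idx s < Suc n"
    show "(s \<in> Cr \<longrightarrow> r' s = {s}) \<and> (s \<in> Up \<longrightarrow> r' s = {}) \<and>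
      (s \<in> Lo \<longrightarrow> r' s = lin r' (d1 (mate s) - {s})) \<and> r' s \<subseteq> {c\<in>Cr. g c = g s}"
    proof (cases "idx s = n")
      case True
      have deg: "lin r (d1 (mate s) - {s}) \<subseteq> {c\<in>Cr. g c = g s}" if "s \<in> Lo"
      proof -
        have "r \<rho> \<subseteq> {c\<in>Cr. g c = g s}" if "\<rho> \<in> d1 (mate s) - {s}" for \<rho>
        proof -
          have "r \<rho> \<subseteq> {c\<in>Cr. g c = g \<rho>}"
            using assms lo_facts[OF \<open>s \<in> Lo\<close> that] True unfolding Inv_def by blast
          then show ?thesis using lo_facts(3)[OF \<open>s \<in> Lo\<close> that] by simp
        qed
        then show ?thesis using lin_subset[of r "d1 (mate s) - {s}"] by blast
      qed
      show ?thesis using True eq deg disj1 disj2 disj3 sS by (auto simp: r'_def)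
    next
      case False
      then have lt2: "idx s < n" using lt by simp
      then show ?thesis using assms sS eq[of s] unfolding Inv_def by (auto simp: r'_def)
    qed
  qed
  then show ?thesis by blast
qed

lemma Inv_ex: "\<exists>r. Inv n r"
proof (induction n)
  case 0 then show ?case by (auto simp: Inv_def)
next
  case (Suc n) then show ?case using Inv_step by blast
qed

lemma aref_ex: "\<exists>r. is_aref S Cr Up d1 g r"
proof -
  obtain n where n: "\<forall>s\<in>S. idx s < n"
    using finite_imageI[OF finS, of idx] unfolding finite_nat_set_iff_bounded by auto
  obtain r where r: "Inv n r" using Inv_ex by blast
  define r0 where "r0 s = (if s \<in> S then r s else {})" for s
  have "is_aref S Cr Up d1 g r0" unfolding is_aref_def
  proof (intro conjI allI ballI impI)
    fix s assume "s \<notin> S" then show "r0 s = {}" by (simp add: r0_def)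
  next
    fix s assume "s \<in> S" then show "r0 s \<subseteq> {c \<in> Cr. g c = g s}"
      using r n unfolding Inv_def r0_def by auto
  next
    fix s assume "s \<in> Cr" then show "r0 s = {s}"
      using r n part unfolding Inv_def r0_def by auto
  next
    fix s assume "s \<in> Up" then show "r0 s = {}"
      using r n part unfolding Inv_def r0_def by auto
  next
    fix t assume t: "t \<in> Up"
    let ?s = "mate t"
    have s: "?s \<in> Lo" "?s \<in> d1 t" "mate ?s = t" using mate_Up[OF t] by auto
    have tS: "t \<in> S" using t part by blast
    have sS: "?s \<in> S" using s part by blast
    have 1: "lin r0 (d1 t) = lin r (d1 t)"
      by (rule lin_cong) (use d1_sub[OF tS] in \<open>auto simp: r0_def\<close>)
    have 2: "d1 t = insert ?s (d1 t - {?s})" using s by blast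
    have 3: "lin r (insert ?s (d1 t - {?s})) = sd (r ?s) (lin r (d1 t - {?s}))"
      using lin_insert[of "d1 t - {?s}" ?s r] fin_d1[OF tS] by simp
    have 4: "r ?s = lin r (d1 t - {?s})" using r n sS s unfolding Inv_def by auto
    have "lin r (d1 t) = {}" using 2 3 4 by (metis sd_self)
    then show "lin r0 (d1 t) = {}" using 1 by simp
  qed
  then show ?thesis by blast
qed

lemma aref_THE: "is_aref S Cr Up d1 g (THE r. is_aref S Cr Up d1 g r)"
proof -
  have "\<exists>!r. is_aref S Cr Up d1 g r" using aref_ex aref_unique by blast
  then show ?thesis by (rule theI')
qed

end


locale morse_ref = morse_abs +
  fixes r
  assumes ref: "is_aref S Cr Up d1 g r"
begin

lemma r_out: "s \<notin> S \<Longrightarrow> r s = {}" using ref unfolding is_aref_def by blast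
lemma r_deg: "s \<in> S \<Longrightarrow> r s \<subseteq> {c\<in>Cr. g c = g s}" using ref unfolding is_aref_def by blast
lemma r_cr: "s \<in> Cr \<Longrightarrow> r s = {s}" using ref unfolding is_aref_def by blast
lemma r_up: "s \<in> Up \<Longrightarrow> r s = {}" using ref unfolding is_aref_def by blast
lemma r_dup: "s \<in> Up \<Longrightarrow> lin r (d1 s) = {}" using ref unfolding is_aref_def by blast

lemma CrS: "Cr \<subseteq> S" and UpS: "Up \<subseteq> S" and LoS: "Lo \<subseteq> S" using part by auto

lemma r_fin: "finite (r s)"
  using r_deg[of s] r_out[of s] CrS fin_sub by (cases "s \<in> S") (auto intro: finite_subset)

lemma r_sub: "lin r x \<subseteq> Cr"
  using lin_subset[of r x] r_deg r_out by fastforce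

lemma r_degx: "x \<subseteq> S \<Longrightarrow> (\<forall>s\<in>x. g s = n) \<Longrightarrow> lin r x \<subseteq> {c\<in>Cr. g c = n}"
  using lin_subset[of r x] r_deg by fastforce

definition inN :: "nat \<Rightarrow> 'a set \<Rightarrow> bool" where
  "inN n x \<longleftrightarrow> (\<exists>A B. A \<subseteq> Up \<and> (\<forall>a\<in>A. g a = n) \<and> B \<subseteq> Up \<and> (\<forall>b\<in>B. g b = Suc n) \<and> x = sd A (lin d1 B))"

lemma inN_empty: "inN n {}"
  unfolding inN_def by (rule exI[of _ "{}"], rule exI[of _ "{}"]) simp

lemma inN_sd:
  assumes "inN n x" "inN n y" shows "inN n (sd x y)"
proof -
  obtain A B where AB: "A \<subseteq> Up" "\<forall>a\<in>A. g a = n" "B \<subseteq> Up" "\<forall>b\<in>B. g b = Suc n" "x = sd A (lin d1 B)"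
    using assms(1) unfolding inN_def by blast
  obtain A' B' where AB': "A' \<subseteq> Up" "\<forall>a\<in>A'. g a = n" "B' \<subseteq> Up" "\<forall>b\<in>B'. g b = Suc n" "y = sd A' (lin d1 B')"
    using assms(2) unfolding inN_def by blast
  have fin: "finite B" "finite B'" using AB(3) AB'(3) UpS fin_sub by auto
  have "lin d1 (sd B B') = sd (lin d1 B) (lin d1 B')" by (rule lin_sd[OF fin])
  then have "sd x y = sd (sd A A') (lin d1 (sd B B'))" using AB(5) AB'(5) by blast
  moreover have "sd A A' \<subseteq> Up" "\<forall>a\<in>sd A A'. g a = n" "sd B B' \<subseteq> Up" "\<forall>b\<in>sd B B'. g b = Suc n"
    using AB AB' by auto
  ultimately show ?thesis unfolding inN_def by blast
qed

lemma R4: "s \<in> S \<Longrightarrow> inN (g s) (sd {s} (r s))"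
proof (induction "idx s" arbitrary: s rule: less_induct)
  case less
  consider "s \<in> Cr" | "s \<in> Lo" | "s \<in> Up" using less.prems part by blast
  then show ?case
  proof cases
    case 1 then show ?thesis using r_cr inN_empty by simp
  next
    case 3
    then have "sd {s} (r s) = sd {s} (lin d1 {})" using r_up by simp
    then show ?thesis unfolding inN_def using 3 by blast
  next
    case 2
    let ?t = "mate s"
    let ?F = "d1 ?t - {s}"
    have t: "?t \<in> Up" "mate ?t = s" using mate_Lo 2 by auto
    have tS: "?t \<in> S" using t UpS by blast
    have st: "s \<in> d1 ?t" using mate_Up[OF t(1)] t(2) by metis
    have gt: "g ?t = Suc (g s)" using d1_deg[OF tS st] .
    have finF: "finite ?F" using fin_d1[OF tS] by simp
    have IH: "inN (g s) (sd {\<rho>} (r \<rho>))" if "\<rho> \<in> ?F" for \<rho>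
      using less.hyps[OF lo_facts(1)[OF 2 that] lo_facts(2)[OF 2 that]] lo_facts(3)[OF 2 that] by simp
    have "inN (g s) (lin (\<lambda>\<rho>. sd {\<rho>} (r \<rho>)) ?F)"
      by (rule lin_closed[of _ "Collect (inN (g s))", simplified]) (use finF IH inN_empty inN_sd in auto)
    moreover have "lin (\<lambda>\<rho>. sd {\<rho>} (r \<rho>)) ?F = sd ?F (r s)"
      using lin_fun_sd[OF finF, of "\<lambda>\<rho>. {\<rho>}" r] lin_id[OF finF] lo_eq[OF ref 2] by simp
    moreover have "inN (g s) (lin d1 {?t})"
      unfolding inN_def using t gt by (intro exI[of _ "{}"] exI[of _ "{?t}"]) auto
    ultimately have "inN (g s) (sd (d1 ?t) (sd ?F (r s)))" using inN_sd by simp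
    moreover have "sd (d1 ?t) (sd ?F (r s)) = sd {s} (r s)" using st by blast
    ultimately show ?thesis by simp
  qed
qed

lemma R4x:
  assumes "x \<subseteq> S" "\<forall>s\<in>x. g s = n"
  shows "inN n (sd x (lin r x))"
proof -
  have fx: "finite x" using assms fin_sub by blast
  have h: "inN n (sd {s} (r s))" if "s \<in> x" for s
  proof -
    have "s \<in> S" "g s = n" using assms that by auto
    then show ?thesis using R4[of s] by simp
  qed
  have "inN n (lin (\<lambda>s. sd {s} (r s)) x)"
    by (rule lin_closed[of _ "Collect (inN n)", simplified]) (use fx h inN_empty inN_sd in auto)
  moreover have "lin (\<lambda>s. sd {s} (r s)) x = sd x (lin r x)"
    using lin_fun_sd[OF fx, of "\<lambda>s. {s}" r] lin_id[OF fx] by simp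
  ultimately show ?thesis by simp
qed

lemma R5:
  assumes "A \<subseteq> Up" "lin d1 A = {}"
  shows "A = {}"
proof (rule ccontr)
  assume ne: "A \<noteq> {}"
  have fA: "finite A" using assms(1) UpS fin_sub by blast
  have fi: "finite (idx ` A)" "idx ` A \<noteq> {}" using fA ne by auto
  obtain t where t0: "t \<in> A" "idx t = Max (idx ` A)" using Max_in[OF fi] by auto
  have t: "t \<in> A" "\<forall>t'\<in>A. idx t' \<le> idx t" using t0 Max_ge[OF fi(1)] by auto
  have tU: "t \<in> Up" using t assms by blast
  have "{t'\<in>A. mate t \<in> d1 t'} = {t}"
  proof
    show "{t'\<in>A. mate t \<in> d1 t'} \<subseteq> {t}"
    proof
      fix t' assume "t' \<in> {t'\<in>A. mate t \<in> d1 t'}"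
      then have "t' \<in> A" "mate t \<in> d1 t'" by auto
      then show "t' \<in> {t}" using A5[OF tU, of t'] assms(1) t(2) by fastforce
    qed
    show "{t} \<subseteq> {t'\<in>A. mate t \<in> d1 t'}" using t mate_Up[OF tU] by auto
  qed
  then have "mate t \<in> lin d1 A" unfolding lin_def by simp
  then show False using assms by simp
qed

lemma dd_x: "B \<subseteq> S \<Longrightarrow> lin d1 (lin d1 B) = {}"
proof -
  assume B: "B \<subseteq> S"
  have "lin d1 (lin d1 B) = lin (\<lambda>b. lin d1 (d1 b)) B"
    by (rule lin_lin) (use B fin_sub fin_d1 in auto)
  also have "\<dots> = {}" by (rule lin_zero) (use B dd in blast)
  finally show ?thesis .
qed

lemma rd_up: "A \<subseteq> Up \<Longrightarrow> lin r (lin d1 A) = {}"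
proof -
  assume A: "A \<subseteq> Up"
  have "lin r (lin d1 A) = lin (\<lambda>b. lin r (d1 b)) A"
    by (rule lin_lin) (use A UpS fin_sub fin_d1 in auto)
  also have "\<dots> = {}" by (rule lin_zero) (use A r_dup in blast)
  finally show ?thesis .
qed

lemma r_upx: "A \<subseteq> Up \<Longrightarrow> lin r A = {}"
  by (rule lin_zero) (use r_up in blast)

lemma r_crx: "c \<subseteq> Cr \<Longrightarrow> lin r c = c"
proof -
  assume c: "c \<subseteq> Cr"
  then have "finite c" using CrS fin_sub by blast
  then have "lin (\<lambda>s. {s}) c = c" by (rule lin_id)
  moreover have "lin r c = lin (\<lambda>s. {s}) c" by (rule lin_cong) (use c r_cr in blast)
  ultimately show ?thesis by simp
qed

lemma cyc_N:
  assumes "inN n x" "lin d1 x = {}"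
  shows "\<exists>B. B \<subseteq> Up \<and> (\<forall>b\<in>B. g b = Suc n) \<and> x = lin d1 B"
proof -
  obtain A B where AB: "A \<subseteq> Up" "\<forall>a\<in>A. g a = n" "B \<subseteq> Up" "\<forall>b\<in>B. g b = Suc n" "x = sd A (lin d1 B)"
    using assms(1) unfolding inN_def by blast
  have BS: "B \<subseteq> S" and AS: "A \<subseteq> S" using AB UpS by auto
  have fA: "finite A" using fin_sub[OF AS] .
  have fdB: "finite (lin d1 B)" using fin_sub[OF d_sub[OF BS]] .
  have "lin d1 x = sd (lin d1 A) (lin d1 (lin d1 B))" unfolding AB(5) by (rule lin_sd[OF fA fdB])
  also have "lin d1 (lin d1 B) = {}" using dd_x AB(3) UpS by blast
  finally have "lin d1 A = {}" using assms(2) by simp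
  then have "A = {}" using R5 AB(1) by blast
  then show ?thesis using AB by auto
qed

lemma chain:
  assumes "x \<subseteq> S" "\<forall>s\<in>x. g s = n"
  shows "lin r (lin d1 x) = lin r (lin d1 (lin r x))"
proof -
  obtain A B where AB: "A \<subseteq> Up" "\<forall>a\<in>A. g a = n" "B \<subseteq> Up" "\<forall>b\<in>B. g b = Suc n" "sd x (lin r x) = sd A (lin d1 B)"
    using R4x[OF assms] unfolding inN_def by blast
  have fx: "finite x" "finite (lin r x)" using fin_sub[OF assms(1)] fin_sub[OF order.trans[OF r_sub CrS]] by auto
  have BS: "B \<subseteq> S" and AS: "A \<subseteq> S" using AB UpS by auto
  have fA: "finite A" using fin_sub[OF AS] .
  have fdB: "finite (lin d1 B)" using fin_sub[OF d_sub[OF BS]] .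
  have fdx: "finite (lin d1 x)" "finite (lin d1 (lin r x))"
    using fin_sub[OF d_sub[OF assms(1)]] fin_sub[OF d_sub[OF order.trans[OF r_sub CrS]]] by auto
  have "sd (lin d1 x) (lin d1 (lin r x)) = lin d1 (sd x (lin r x))" by (rule lin_sd[OF fx, symmetric])
  also have "\<dots> = sd (lin d1 A) (lin d1 (lin d1 B))" unfolding AB(5) by (rule lin_sd[OF fA fdB])
  also have "lin d1 (lin d1 B) = {}" using dd_x AB(3) UpS by blast
  finally have "sd (lin d1 x) (lin d1 (lin r x)) = lin d1 A" by simp
  then have "lin r (sd (lin d1 x) (lin d1 (lin r x))) = {}" using rd_up[OF AB(1)] by simp
  then have "sd (lin r (lin d1 x)) (lin r (lin d1 (lin r x))) = {}" by (simp only: lin_sd[OF fdx])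
  then show ?thesis by blast
qed

end


context morse_ref
begin

lemma fin_Pow: "x \<in> Pow {s\<in>S. g s = n} \<Longrightarrow> finite x"
  by (rule fin_sub) auto

lemma d_lin: "x \<subseteq> S \<Longrightarrow> y \<subseteq> S \<Longrightarrow> lin d1 (sd x y) = sd (lin d1 x) (lin d1 y)"
  by (rule lin_sd) (rule fin_sub, assumption)+

lemma dh_lin:
  assumes "x \<subseteq> S" "y \<subseteq> S"
  shows "lin r (lin d1 (sd x y)) = sd (lin r (lin d1 x)) (lin r (lin d1 y))"
proof -
  have "finite (lin d1 x)" "finite (lin d1 y)" using fin_sub[OF d_sub[OF assms(1)]] fin_sub[OF d_sub[OF assms(2)]] by auto
  then have "lin r (sd (lin d1 x) (lin d1 y)) = sd (lin r (lin d1 x)) (lin r (lin d1 y))" by (rule lin_sd)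
  then show ?thesis using d_lin[OF assms] by simp
qed

theorem abs_iso:
  "vs_iso (quot_space {c \<in> Pow {s\<in>S. g s = n}. lin d1 c = {}} (lin d1 ` Pow {s\<in>S. g s = Suc n}))
          (quot_space {c \<in> Pow {s\<in>Cr. g s = n}. lin r (lin d1 c) = {}}
                      ((\<lambda>c. lin r (lin d1 c)) ` Pow {s\<in>Cr. g s = Suc n}))"
proof (rule quot_iso)
  let ?Z = "{c \<in> Pow {s\<in>S. g s = n}. lin d1 c = {}}"
  let ?B = "lin d1 ` Pow {s\<in>S. g s = Suc n}"
  let ?Bh = "(\<lambda>c. lin r (lin d1 c)) ` Pow {s\<in>Cr. g s = Suc n}"
  let ?Zh = "{c \<in> Pow {s\<in>Cr. g s = n}. lin r (lin d1 c) = {}}"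
  show "subgrp ?B" unfolding subgrp_def
  proof (intro conjI ballI)
    show "{} \<in> ?B" by (rule image_eqI[of _ _ "{}"]) auto
    fix x y assume "x \<in> ?B" "y \<in> ?B"
    then obtain x' y' where "x' \<subseteq> {s\<in>S. g s = Suc n}" "y' \<subseteq> {s\<in>S. g s = Suc n}" "x = lin d1 x'" "y = lin d1 y'"
      by auto
    moreover then have "x' \<subseteq> S" "y' \<subseteq> S" by auto
    moreover then have "lin d1 (sd x' y') = sd x y" using calculation d_lin[of x' y'] by simp
    moreover have "sd x' y' \<in> Pow {s\<in>S. g s = Suc n}" using calculation by auto
    ultimately show "sd x y \<in> ?B" by blast
  qed
  show "subgrp ?Bh" unfolding subgrp_def
  proof (intro conjI ballI)
    show "{} \<in> ?Bh" by (rule image_eqI[of _ _ "{}"]) auto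
    fix x y assume "x \<in> ?Bh" "y \<in> ?Bh"
    then obtain x' y' where "x' \<subseteq> {s\<in>Cr. g s = Suc n}" "y' \<subseteq> {s\<in>Cr. g s = Suc n}"
       "x = lin r (lin d1 x')" "y = lin r (lin d1 y')"
      by auto
    moreover then have "x' \<subseteq> S" "y' \<subseteq> S" using CrS by auto
    moreover then have "lin r (lin d1 (sd x' y')) = sd x y" using calculation dh_lin[of x' y'] by simp
    moreover have "sd x' y' \<in> Pow {s\<in>Cr. g s = Suc n}" using calculation by auto
    ultimately show "sd x y \<in> ?Bh" by blast
  qed
  show "subgrp ?Z" unfolding subgrp_def
  proof (intro conjI ballI)
    show "{} \<in> ?Z" by simp
    fix x y assume "x \<in> ?Z" "y \<in> ?Z"
    then show "sd x y \<in> ?Z" using d_lin[of x y] by auto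
  qed
  show "?B \<subseteq> ?Z"
  proof
    fix b assume "b \<in> ?B"
    then obtain w where w: "w \<subseteq> {s\<in>S. g s = Suc n}" "b = lin d1 w" by auto
    have wS: "w \<subseteq> S" "\<forall>s\<in>w. g s = Suc n" using w by auto
    have "b \<subseteq> {s\<in>S. g s = n}" using w(2) d_sub[OF wS(1)] d_deg[OF wS] by auto
    moreover have "lin d1 b = {}" using w(2) dd_x[OF wS(1)] by simp
    ultimately show "b \<in> ?Z" by simp
  qed
  show "lin r z \<in> ?Zh" if "z \<in> ?Z" for z
  proof -
    have z: "z \<subseteq> S" "\<forall>s\<in>z. g s = n" "lin d1 z = {}" using that by auto
    have "lin r z \<subseteq> {c\<in>Cr. g c = n}" using r_degx[OF z(1) z(2)] .
    moreover have "lin r (lin d1 (lin r z)) = {}" using chain[OF z(1,2)] z(3) by simp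
    ultimately show ?thesis by simp
  qed
  show "lin r (sd x y) = sd (lin r x) (lin r y)" if "x \<in> ?Z" "y \<in> ?Z" for x y
  proof -
    have "finite x" "finite y" using that fin_Pow by auto
    then show ?thesis by (rule lin_sd)
  qed
  show "lin r b \<in> ?Bh" if "b \<in> ?B" for b
  proof -
    obtain w where w: "w \<subseteq> {s\<in>S. g s = Suc n}" "b = lin d1 w" using \<open>b \<in> ?B\<close> by auto
    have wS: "w \<subseteq> S" "\<forall>s\<in>w. g s = Suc n" using w by auto
    have "lin r b = lin r (lin d1 (lin r w))" using chain[OF wS] w(2) by simp
    moreover have "lin r w \<in> Pow {s\<in>Cr. g s = Suc n}" using r_degx[OF wS] by simp
    ultimately show ?thesis by blast
  qed
  show "\<exists>z\<in>?Z. lin r z = zh" if "zh \<in> ?Zh" for zh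
  proof -
    have zh: "zh \<subseteq> Cr" "\<forall>s\<in>zh. g s = n" "lin r (lin d1 zh) = {}" using that by auto
    have zhS: "zh \<subseteq> S" using zh CrS by auto
    show ?thesis
    proof (cases n)
      case 0
      then have "lin d1 zh = {}" using d_deg0[OF zhS] zh(2) by simp
      then show ?thesis using zh zhS r_crx[of zh] by (intro bexI[of _ zh]) auto
    next
      case (Suc m)
      let ?x = "lin d1 zh"
      have xS: "?x \<subseteq> S" and xg: "\<forall>s\<in>?x. g s = m"
        using d_sub[OF zhS] d_deg[OF zhS, of m] zh Suc by auto
      have "inN m (sd ?x (lin r ?x))" using R4x[OF xS xg] .
      then have "inN m ?x" using zh by simp
      moreover have "lin d1 ?x = {}" using dd_x[OF zhS] .
      ultimately obtain B where B: "B \<subseteq> Up" "\<forall>b\<in>B. g b = Suc m" "?x = lin d1 B"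
        using cyc_N[of m ?x] by blast
      have BS: "B \<subseteq> S" using B UpS by auto
      let ?z = "sd zh B"
      have "?z \<subseteq> {s\<in>S. g s = n}" using zh(2) zhS B(2) BS Suc by auto
      moreover have "lin d1 ?z = {}" using d_lin[OF zhS BS] B by simp
      moreover have "lin r ?z = zh"
      proof -
        have "finite zh" "finite B" using fin_sub[OF zhS] fin_sub[OF BS] by auto
        then have "lin r ?z = sd (lin r zh) (lin r B)" by (rule lin_sd)
        then show ?thesis using r_crx[OF zh(1)] r_upx[OF B(1)] by simp
      qed
      ultimately show ?thesis by blast
    qed
  qed
  show "z \<in> ?B" if zZ: "z \<in> ?Z" and zB: "lin r z \<in> ?Bh" for z
  proof -
    have z: "z \<subseteq> S" "\<forall>s\<in>z. g s = n" "lin d1 z = {}" using zZ by auto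
    obtain w where w: "w \<subseteq> {s\<in>Cr. g s = Suc n}" "lin r z = lin r (lin d1 w)" using zB by auto
    have wS: "w \<subseteq> S" using w CrS by auto
    let ?x = "sd z (lin d1 w)"
    have dwS: "lin d1 w \<subseteq> S" "\<forall>s\<in>lin d1 w. g s = n" using d_sub[OF wS] d_deg[OF wS, of n] w by auto
    have xS: "?x \<subseteq> S" "\<forall>s\<in>?x. g s = n" using z dwS by auto
    have "lin d1 ?x = sd (lin d1 z) (lin d1 (lin d1 w))" using d_lin[OF z(1) dwS(1)] .
    then have dx: "lin d1 ?x = {}" using z dd_x[OF wS] by simp
    have "finite z" "finite (lin d1 w)" using fin_sub[OF z(1)] fin_sub[OF dwS(1)] by auto
    then have "lin r ?x = sd (lin r z) (lin r (lin d1 w))" by (rule lin_sd)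
    then have "lin r ?x = {}" using w by simp
    then have "inN n ?x" using R4x[OF xS] by simp
    then obtain B where B: "B \<subseteq> Up" "\<forall>b\<in>B. g b = Suc n" "?x = lin d1 B" using cyc_N[of n ?x] dx by blast
    have BS: "B \<subseteq> S" using B UpS by auto
    have "z = sd ?x (lin d1 w)" by blast
    also have "\<dots> = lin d1 (sd B w)" using B(3) d_lin[OF BS wS] by simp
    finally have "z = lin d1 (sd B w)" .
    moreover have "sd B w \<in> Pow {s\<in>S. g s = Suc n}" using B BS w wS by auto
    ultimately show ?thesis by blast
  qed
qed

end


lemma two_between:
  assumes "finite v" "u \<subseteq> v" "card v = card u + 2"
  shows "card {t. u \<subseteq> t \<and> t \<subseteq> v \<and> card t = card u + 1} = 2"
proof -
  have fu: "finite u" using assms finite_subset by blast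
  have "card (v - u) = 2" using assms fu by (simp add: card_Diff_subset)
  then obtain a b where ab: "v - u = {a, b}" "a \<noteq> b" by (meson card_2_iff)
  have "{t. u \<subseteq> t \<and> t \<subseteq> v \<and> card t = card u + 1} = {insert a u, insert b u}"
  proof
    show "{t. u \<subseteq> t \<and> t \<subseteq> v \<and> card t = card u + 1} \<subseteq> {insert a u, insert b u}"
    proof
      fix t assume "t \<in> {t. u \<subseteq> t \<and> t \<subseteq> v \<and> card t = card u + 1}"
      then have t: "u \<subseteq> t" "t \<subseteq> v" "card t = card u + 1" by auto
      have ft: "finite t" using t assms finite_subset by blast
      have "card (t - u) = 1" using t ft fu by (simp add: card_Diff_subset)
      then obtain c where c: "t - u = {c}" using card_1_singleton_iff[of "t - u"] by auto
      then have "c \<in> {a, b}" using t ab by blast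
      moreover have "t = insert c u" using c t by blast
      ultimately show "t \<in> {insert a u, insert b u}" by blast
    qed
    show "{insert a u, insert b u} \<subseteq> {t. u \<subseteq> t \<and> t \<subseteq> v \<and> card t = card u + 1}"
    proof -
      have "a \<notin> u" "b \<notin> u" "a \<in> v" "b \<in> v" using ab by auto
      then show ?thesis using fu assms(2) by auto
    qed
  qed
  moreover have "insert a u \<noteq> insert b u" using ab by blast
  ultimately show ?thesis by simp
qed

lemma sc_fin: "simplicial_complex K \<Longrightarrow> s \<in> K \<Longrightarrow> finite s"
  unfolding simplicial_complex_def by blast
lemma sc_ne: "simplicial_complex K \<Longrightarrow> s \<in> K \<Longrightarrow> s \<noteq> {}"
  unfolding simplicial_complex_def by blast
lemma sc_sub: "simplicial_complex K \<Longrightarrow> s \<in> K \<Longrightarrow> t \<subseteq> s \<Longrightarrow> t \<noteq> {} \<Longrightarrow> t \<in> K"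
  unfolding simplicial_complex_def by blast
lemma sc_finK: "simplicial_complex K \<Longrightarrow> finite K"
  unfolding simplicial_complex_def by blast

lemma dd_bd:
  assumes sc: "simplicial_complex K" and s: "s \<in> K"
  shows "lin (bd1 K) (bd1 K s) = {}"
proof -
  have "even (card {t \<in> bd1 K s. x \<in> bd1 K t})" for x
  proof (cases "{t \<in> bd1 K s. x \<in> bd1 K t} = {}")
    case True then show ?thesis by (simp only: True card.empty) simp
  next
    case False
    then obtain t0 where t0: "t0 \<in> K" "t0 \<subset> s" "card t0 + 1 = card s" "x \<in> K" "x \<subset> t0" "card x + 1 = card t0"
      unfolding bd1_def by blast
    have fs: "finite s" using sc_fin[OF sc s] .
    have eq: "{t \<in> bd1 K s. x \<in> bd1 K t} = {t. x \<subseteq> t \<and> t \<subseteq> s \<and> card t = card x + 1}"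
    proof
      show "{t \<in> bd1 K s. x \<in> bd1 K t} \<subseteq> {t. x \<subseteq> t \<and> t \<subseteq> s \<and> card t = card x + 1}"
        unfolding bd1_def by auto
      show "{t. x \<subseteq> t \<and> t \<subseteq> s \<and> card t = card x + 1} \<subseteq> {t \<in> bd1 K s. x \<in> bd1 K t}"
      proof
        fix t assume "t \<in> {t. x \<subseteq> t \<and> t \<subseteq> s \<and> card t = card x + 1}"
        then have t: "x \<subseteq> t" "t \<subseteq> s" "card t = card x + 1" by auto
        have "t \<noteq> {}" using t(1) sc_ne[OF sc t0(4)] by blast
        then have tK: "t \<in> K" using sc_sub[OF sc s t(2)] by blast
        have "t \<noteq> s" using t t0 by auto
        moreover have "t \<noteq> x" using t by auto
        ultimately show "t \<in> {t \<in> bd1 K s. x \<in> bd1 K t}"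
          unfolding bd1_def using t t0 tK by auto
      qed
    qed
    have "card {t. x \<subseteq> t \<and> t \<subseteq> s \<and> card t = card x + 1} = 2"
      by (rule two_between) (use fs t0 in auto)
    then show ?thesis using eq by simp
  qed
  then show ?thesis unfolding lin_def by simp
qed

lemma dd_cobd:
  assumes sc: "simplicial_complex K" and s: "s \<in> K"
  shows "lin (cobd1 K) (cobd1 K s) = {}"
proof -
  have "even (card {t \<in> cobd1 K s. x \<in> cobd1 K t})" for x
  proof (cases "{t \<in> cobd1 K s. x \<in> cobd1 K t} = {}")
    case True then show ?thesis by (simp only: True card.empty) simp
  next
    case False
    then obtain t0 where t0: "t0 \<in> K" "s \<subset> t0" "card t0 = card s + 1" "x \<in> K" "t0 \<subset> x" "card x = card t0 + 1"
      unfolding cobd1_def by blast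
    have fx: "finite x" using sc_fin[OF sc t0(4)] .
    have eq: "{t \<in> cobd1 K s. x \<in> cobd1 K t} = {t. s \<subseteq> t \<and> t \<subseteq> x \<and> card t = card s + 1}"
    proof
      show "{t \<in> cobd1 K s. x \<in> cobd1 K t} \<subseteq> {t. s \<subseteq> t \<and> t \<subseteq> x \<and> card t = card s + 1}"
        unfolding cobd1_def by auto
      show "{t. s \<subseteq> t \<and> t \<subseteq> x \<and> card t = card s + 1} \<subseteq> {t \<in> cobd1 K s. x \<in> cobd1 K t}"
      proof
        fix t assume "t \<in> {t. s \<subseteq> t \<and> t \<subseteq> x \<and> card t = card s + 1}"
        then have t: "s \<subseteq> t" "t \<subseteq> x" "card t = card s + 1" by auto
        have "t \<noteq> {}" using t(1) sc_ne[OF sc s] by blast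
        then have tK: "t \<in> K" using sc_sub[OF sc t0(4) t(2)] by blast
        have "t \<noteq> x" using t t0 by auto
        moreover have "t \<noteq> s" using t by auto
        ultimately show "t \<in> {t \<in> cobd1 K s. x \<in> cobd1 K t}"
          unfolding cobd1_def using t t0 tK by auto
      qed
    qed
    have "card {t. s \<subseteq> t \<and> t \<subseteq> x \<and> card t = card s + 1} = 2"
      by (rule two_between) (use fx t0 in auto)
    then show ?thesis using eq by simp
  qed
  then show ?thesis unfolding lin_def by simp
qed



locale mseq =
  fixes K :: "'a set set" and W :: "'a set set list"
  assumes sc: "simplicial_complex K" and ms: "morse_seq K W"
begin

abbreviation "L \<equiv> length W"
abbreviation D :: "nat \<Rightarrow> 'a set set" where "D i \<equiv> W ! Suc i - W ! i"

definition idx :: "'a set \<Rightarrow> nat" where "idx s = (LEAST i. s \<in> W ! Suc i)"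
definition mate :: "'a set \<Rightarrow> 'a set" where
  "mate s = (SOME t. \<exists>i. Suc i < L \<and> D i = {s, t} \<and> s \<noteq> t)"

lemma W0: "W ! 0 = {}" and Wne: "W \<noteq> []" and Wlast: "W ! (L - 1) = K"
  using ms unfolding morse_seq_def by (auto simp: last_conv_nth)

lemma step_cases:
  assumes "Suc i < L"
  shows "(\<exists>\<nu>. D i = {\<nu>} \<and> facet (W ! Suc i) \<nu> \<and> W ! i = W ! Suc i - {\<nu>}) \<or>
         (\<exists>\<sigma> \<tau>. D i = {\<sigma>, \<tau>} \<and> free_pair (W ! Suc i) \<sigma> \<tau> \<and> W ! i = W ! Suc i - {\<sigma>, \<tau>})"
proof -
  have "elem_expansion (W ! i) (W ! Suc i) \<or> elem_filling (W ! i) (W ! Suc i)"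
    using ms assms unfolding morse_seq_def by blast
  then show ?thesis
  proof
    assume "elem_expansion (W ! i) (W ! Suc i)"
    then obtain \<sigma> \<tau> where st: "free_pair (W ! Suc i) \<sigma> \<tau>" "W ! i = W ! Suc i - {\<sigma>, \<tau>}"
      unfolding elem_expansion_def by blast
    then have "D i = {\<sigma>, \<tau>}" unfolding free_pair_def by auto
    then show ?thesis using st by blast
  next
    assume "elem_filling (W ! i) (W ! Suc i)"
    then obtain \<nu> where st: "facet (W ! Suc i) \<nu>" "W ! i = W ! Suc i - {\<nu>}"
      unfolding elem_filling_def by blast
    then have "D i = {\<nu>}" unfolding facet_def by auto
    then show ?thesis using st by blast
  qed
qed

lemma step_sub: "Suc i < L \<Longrightarrow> W ! i \<subseteq> W ! Suc i"
  using step_cases by blast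

lemma mono: "i \<le> j \<Longrightarrow> j < L \<Longrightarrow> W ! i \<subseteq> W ! j"
proof (induction j rule: dec_induct)
  case base then show ?case by simp
next
  case (step j) then show ?case using step_sub[of j] by auto
qed

lemma L_pos: "0 < L" using Wne by simp

lemma WK: "j < L \<Longrightarrow> W ! j \<subseteq> K"
  using mono[of j "L - 1"] Wlast by simp

lemma cplx_aux: "k = L - 1 - j \<Longrightarrow> j < L \<Longrightarrow> s \<in> W ! j \<Longrightarrow> t \<subseteq> s \<Longrightarrow> t \<noteq> {} \<Longrightarrow> t \<in> W ! j"
proof (induction k arbitrary: j s t)
  case 0
  then have "j = L - 1" by simp
  then have sK: "s \<in> K" using 0 Wlast by simp
  have "t \<in> K" using sc_sub[OF sc sK 0(4) 0(5)] .
  then show ?case using \<open>j = L - 1\<close> Wlast by simp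
next
  case (Suc k)
  have j1: "Suc j < L" "k = L - 1 - Suc j" using Suc.prems(1,2) by auto
  have sj: "s \<in> W ! Suc j" using step_sub[OF j1(1)] Suc.prems(3) by blast
  have tj: "t \<in> W ! Suc j" using Suc.IH[OF j1(2) j1(1) sj Suc.prems(4) Suc.prems(5)] .
  show ?case
    using step_cases[OF j1(1)]
  proof
    assume "\<exists>\<nu>. D j = {\<nu>} \<and> facet (W ! Suc j) \<nu> \<and> W ! j = W ! Suc j - {\<nu>}"
    then obtain \<nu> where nu0: "D j = {\<nu>} \<and> facet (W ! Suc j) \<nu> \<and> W ! j = W ! Suc j - {\<nu>}" ..
    have nu: "facet (W ! Suc j) \<nu>" "W ! j = W ! Suc j - {\<nu>}" using conjunct2[OF nu0] by (rule conjunct1, rule conjunct2)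
    have "t \<noteq> \<nu>"
    proof
      assume "t = \<nu>"
      then have "s = \<nu>" using nu(1) sj Suc.prems(4) unfolding facet_def by blast
      then show False using Suc.prems(3) by (simp add: nu(2))
    qed
    then show ?thesis using tj by (simp add: nu(2))
  next
    assume "\<exists>\<sigma> \<tau>. D j = {\<sigma>, \<tau>} \<and> free_pair (W ! Suc j) \<sigma> \<tau> \<and> W ! j = W ! Suc j - {\<sigma>, \<tau>}"
    then obtain \<sigma> \<tau> where st0: "D j = {\<sigma>, \<tau>} \<and> free_pair (W ! Suc j) \<sigma> \<tau> \<and> W ! j = W ! Suc j - {\<sigma>, \<tau>}" by (elim exE)
    have st: "free_pair (W ! Suc j) \<sigma> \<tau>" "W ! j = W ! Suc j - {\<sigma>, \<tau>}" using conjunct2[OF st0] by (rule conjunct1, rule conjunct2)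
    have "t \<noteq> \<sigma>"
    proof
      assume "t = \<sigma>"
      then have "s = \<sigma> \<or> s = \<tau>" using st(1) sj Suc.prems(4) unfolding free_pair_def by blast
      then show False using Suc.prems(3) by (auto simp add: st(2))
    qed
    moreover have "t \<noteq> \<tau>"
    proof
      assume "t = \<tau>"
      then have "\<sigma> \<subseteq> s" using st(1) Suc.prems(4) unfolding free_pair_def by blast
      then have "s = \<sigma> \<or> s = \<tau>" using st(1) sj unfolding free_pair_def by blast
      then show False using Suc.prems(3) by (auto simp add: st(2))
    qed
    ultimately show ?thesis using tj by (simp add: st(2))
  qed
qed

lemma cplx: "j < L \<Longrightarrow> s \<in> W ! j \<Longrightarrow> t \<subseteq> s \<Longrightarrow> t \<noteq> {} \<Longrightarrow> t \<in> W ! j"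
  using cplx_aux by blast

lemma free_card:
  assumes j: "j < L" and fp: "free_pair (W ! j) \<sigma> \<tau>"
  shows "card \<tau> = Suc (card \<sigma>)"
proof -
  have st: "\<sigma> \<in> W ! j" "\<tau> \<in> W ! j" "\<sigma> \<subset> \<tau>" and fr: "\<forall>\<rho>\<in>W ! j. \<sigma> \<subseteq> \<rho> \<longrightarrow> \<rho> = \<sigma> \<or> \<rho> = \<tau>"
    using fp unfolding free_pair_def by auto
  have ft: "finite \<tau>" using sc_fin[OF sc] WK[OF j] st by blast
  obtain x where x: "x \<in> \<tau>" "x \<notin> \<sigma>" using st(3) by blast
  let ?r = "insert x \<sigma>"
  have "?r \<in> W ! j" using cplx[OF j st(2), of ?r] x st(3) by blast
  then have "?r = \<tau>" using fr x by blast
  moreover have "finite \<sigma>" using ft st(3) finite_subset by blast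
  ultimately show ?thesis using x by auto
qed

lemma idx_facts:
  assumes "s \<in> K"
  shows "Suc (idx s) < L" "s \<in> W ! Suc (idx s)" "s \<notin> W ! idx s"
proof -
  have "L - 1 \<noteq> 0" using assms W0 Wlast by (metis empty_iff)
  then obtain i where i: "L - 1 = Suc i" by (cases "L - 1") auto
  have si: "s \<in> W ! Suc i" using assms Wlast i by simp
  show s1: "s \<in> W ! Suc (idx s)" unfolding idx_def by (rule LeastI[of _ i]) (rule si)
  have "idx s \<le> i" unfolding idx_def by (rule Least_le) (rule si)
  then show "Suc (idx s) < L" using i by simp
  show "s \<notin> W ! idx s"
  proof (cases "idx s")
    case 0 then show ?thesis using W0 by simp
  next
    case (Suc k)
    have "\<not> s \<in> W ! Suc k" using not_less_Least[of k "\<lambda>i. s \<in> W ! Suc i"] Suc unfolding idx_def by simp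
    then show ?thesis using Suc by simp
  qed
qed

lemma mem_iff:
  assumes "s \<in> K" "j < L"
  shows "s \<in> W ! j \<longleftrightarrow> idx s < j"
proof
  assume "idx s < j"
  then show "s \<in> W ! j" using mono[of "Suc (idx s)" j] idx_facts[OF assms(1)] assms(2) by auto
next
  assume h: "s \<in> W ! j"
  show "idx s < j"
  proof (rule ccontr)
    assume "\<not> idx s < j"
    then have "W ! j \<subseteq> W ! idx s" using mono[of j "idx s"] idx_facts[OF assms(1)] by simp
    then show False using h idx_facts[OF assms(1)] by blast
  qed
qed

lemma D_idx:
  assumes "Suc i < L" "s \<in> D i"
  shows "idx s = i"
proof -
  have sK: "s \<in> K" using assms WK[OF assms(1)] by blast
  have "idx s < Suc i" using mem_iff[OF sK assms(1)] assms by blast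
  moreover have "\<not> idx s < i" using mem_iff[OF sK] assms by simp
  ultimately show ?thesis by simp
qed

lemma mate_eq:
  assumes "Suc i < L" "D i = {a, b}" "a \<noteq> b"
  shows "mate a = b"
proof -
  let ?P = "\<lambda>t. \<exists>i. Suc i < L \<and> D i = {a, t} \<and> a \<noteq> t"
  have "?P b" using assms by blast
  then have "?P (mate a)" unfolding mate_def by (rule someI)
  then obtain j where j: "Suc j < L" "D j = {a, mate a}" "a \<noteq> mate a" by blast
  have "idx a = j" using D_idx[OF j(1)] j(2) by blast
  moreover have "idx a = i" using D_idx[OF assms(1)] assms(2) by blast
  ultimately have "{a, mate a} = {a, b}" using j assms by simp
  then show ?thesis using j(3) assms(3) by (metis doubleton_eq_iff)
qed

lemma pair_eq:
  assumes "{a, b} = {c, d}" "a \<subset> b" "c \<subset> d"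
  shows "a = c \<and> b = d"
proof -
  have "(a = c \<and> b = d) \<or> (a = d \<and> b = c)" using assms(1) by (simp add: doubleton_eq_iff)
  moreover have "\<not> (a = d \<and> b = c)"
  proof
    assume "a = d \<and> b = c"
    then have "b \<subset> a" using assms(3) by simp
    then show False using assms(2) by (meson less_asym)
  qed
  ultimately show ?thesis by blast
qed

lemma up_char:
  assumes "\<tau> \<in> upper_regular W"
  shows "Suc (idx \<tau>) < L" "free_pair (W ! Suc (idx \<tau>)) (mate \<tau>) \<tau>"
        "W ! idx \<tau> = W ! Suc (idx \<tau>) - {mate \<tau>, \<tau>}" "D (idx \<tau>) = {mate \<tau>, \<tau>}"
proof -
  from assms obtain i \<sigma> where i: "Suc i < L" "\<sigma> \<subset> \<tau>" "D i = {\<sigma>, \<tau>}"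
    unfolding upper_regular_def by auto
  have tD: "\<tau> \<in> D i" using i(3) by simp
  have ii: "idx \<tau> = i" using D_idx[OF i(1) tD] .
  have ne: "\<tau> \<noteq> \<sigma>" using i(2) by blast
  have "D i = {\<tau>, \<sigma>}" using i(3) by (simp add: insert_commute)
  then have m: "mate \<tau> = \<sigma>" using mate_eq[OF i(1) _ ne] by simp
  from step_cases[OF i(1)]
  have "free_pair (W ! Suc i) \<sigma> \<tau> \<and> W ! i = W ! Suc i - {\<sigma>, \<tau>}"
  proof
    assume "\<exists>\<nu>. D i = {\<nu>} \<and> facet (W ! Suc i) \<nu> \<and> W ! i = W ! Suc i - {\<nu>}"
    then obtain \<nu> where nu: "D i = {\<nu>} \<and> facet (W ! Suc i) \<nu> \<and> W ! i = W ! Suc i - {\<nu>}" ..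
    have "\<sigma> \<in> D i" "\<tau> \<in> D i" using i(3) by simp_all
    then have "\<sigma> = \<nu>" "\<tau> = \<nu>" using conjunct1[OF nu] by simp_all
    then show ?thesis using ne by simp
  next
    assume "\<exists>\<sigma>' \<tau>'. D i = {\<sigma>', \<tau>'} \<and> free_pair (W ! Suc i) \<sigma>' \<tau>' \<and> W ! i = W ! Suc i - {\<sigma>', \<tau>'}"
    then obtain \<sigma>' \<tau>' where st: "D i = {\<sigma>', \<tau>'} \<and> free_pair (W ! Suc i) \<sigma>' \<tau>' \<and> W ! i = W ! Suc i - {\<sigma>', \<tau>'}"
      by (elim exE)
    have st1: "D i = {\<sigma>', \<tau>'}" using st by (rule conjunct1)
    have st2: "free_pair (W ! Suc i) \<sigma>' \<tau>'" "W ! i = W ! Suc i - {\<sigma>', \<tau>'}"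
      using conjunct2[OF st] by (rule conjunct1, rule conjunct2)
    have "\<sigma>' \<subset> \<tau>'" using st2(1) unfolding free_pair_def by blast
    moreover have "{\<sigma>, \<tau>} = {\<sigma>', \<tau>'}" using st1 i(3) by simp
    ultimately have "\<sigma> = \<sigma>' \<and> \<tau> = \<tau>'" using pair_eq i(2) by blast
    then show ?thesis using st2 by simp
  qed
  then show "free_pair (W ! Suc (idx \<tau>)) (mate \<tau>) \<tau>"
        "W ! idx \<tau> = W ! Suc (idx \<tau>) - {mate \<tau>, \<tau>}" unfolding ii m by simp_all
  show "Suc (idx \<tau>) < L" using i(1) ii by simp
  show "D (idx \<tau>) = {mate \<tau>, \<tau>}" using i(3) unfolding ii m .
qed

lemma lo_char:
  assumes "\<sigma> \<in> lower_regular W"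
  shows "Suc (idx \<sigma>) < L" "free_pair (W ! Suc (idx \<sigma>)) \<sigma> (mate \<sigma>)"
        "W ! idx \<sigma> = W ! Suc (idx \<sigma>) - {\<sigma>, mate \<sigma>}" "D (idx \<sigma>) = {\<sigma>, mate \<sigma>}"
        "mate \<sigma> \<in> upper_regular W" "mate (mate \<sigma>) = \<sigma>" "idx (mate \<sigma>) = idx \<sigma>"
proof -
  from assms obtain i \<tau> where i: "Suc i < L" "\<sigma> \<subset> \<tau>" "D i = {\<sigma>, \<tau>}"
    unfolding lower_regular_def by auto
  have ne: "\<sigma> \<noteq> \<tau>" using i(2) by blast
  have m: "mate \<sigma> = \<tau>" using mate_eq[OF i(1) i(3) ne] .
  have tu: "\<tau> \<in> upper_regular W" unfolding upper_regular_def using i by blast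
  have "D i = {\<tau>, \<sigma>}" using i(3) by (simp add: insert_commute)
  then have m2: "mate \<tau> = \<sigma>" using mate_eq[OF i(1) _ ne[symmetric]] by simp
  have ii: "idx \<sigma> = i" "idx \<tau> = i" using D_idx[OF i(1)] i(3) by simp_all
  note u = up_char[OF tu]
  show "Suc (idx \<sigma>) < L" "free_pair (W ! Suc (idx \<sigma>)) \<sigma> (mate \<sigma>)"
        "W ! idx \<sigma> = W ! Suc (idx \<sigma>) - {\<sigma>, mate \<sigma>}" "D (idx \<sigma>) = {\<sigma>, mate \<sigma>}"
        "mate \<sigma> \<in> upper_regular W" "mate (mate \<sigma>) = \<sigma>" "idx (mate \<sigma>) = idx \<sigma>"
    using u tu unfolding m m2 ii by simp_all
qed

lemma up_facts:
  assumes "\<tau> \<in> upper_regular W"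
  shows "mate \<tau> \<in> lower_regular W" "mate (mate \<tau>) = \<tau>" "idx (mate \<tau>) = idx \<tau>"
proof -
  note u = up_char[OF assms]
  have mt: "mate \<tau> \<subset> \<tau>" using u(2) unfolding free_pair_def by blast
  show "mate \<tau> \<in> lower_regular W" unfolding lower_regular_def
    by (rule CollectI, rule exI[of _ "idx \<tau>"], rule exI[of _ \<tau>]) (use u(1,4) mt in simp)
  have "mate \<tau> \<noteq> \<tau>" using mt by blast
  then show "mate (mate \<tau>) = \<tau>" using mate_eq[OF u(1) u(4)] by simp
  show "idx (mate \<tau>) = idx \<tau>" using D_idx[OF u(1), of "mate \<tau>"] u(4) by simp
qed

lemma crit_char:
  assumes "\<nu> \<in> critical W"
  shows "D (idx \<nu>) = {\<nu>}" "Suc (idx \<nu>) < L"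
proof -
  from assms obtain i where i: "Suc i < L" "D i = {\<nu>}" unfolding critical_def by auto
  then have "idx \<nu> = i" using D_idx[OF i(1), of \<nu>] by simp
  then show "D (idx \<nu>) = {\<nu>}" "Suc (idx \<nu>) < L" using i by simp_all
qed

lemma critK: "critical W \<subseteq> K"
proof
  fix s assume "s \<in> critical W"
  note c = crit_char[OF this]
  have "s \<in> D (idx s)" using c(1) by simp
  then show "s \<in> K" using WK[OF c(2)] by blast
qed

lemma upK: "upper_regular W \<subseteq> K"
proof
  fix s assume "s \<in> upper_regular W"
  note c = up_char[OF this]
  have "s \<in> D (idx s)" using c(4) by simp
  then show "s \<in> K" using WK[OF c(1)] by blast
qed

lemma loK: "lower_regular W \<subseteq> K"
proof
  fix s assume "s \<in> lower_regular W"
  note c = lo_char[OF this]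
  have "s \<in> D (idx s)" using c(4) by simp
  then show "s \<in> K" using WK[OF c(1)] by blast
qed

lemma part: "K = critical W \<union> lower_regular W \<union> upper_regular W"
proof
  show "critical W \<union> lower_regular W \<union> upper_regular W \<subseteq> K" using critK upK loK by blast
  show "K \<subseteq> critical W \<union> lower_regular W \<union> upper_regular W"
  proof
    fix s assume sK: "s \<in> K"
    note f = idx_facts[OF sK]
    define i where "i = idx s"
    have f1: "Suc i < L" using f(1) i_def by simp
    have sD: "s \<in> D i" using f i_def by simp
    from step_cases[OF f1]
    show "s \<in> critical W \<union> lower_regular W \<union> upper_regular W"
    proof
      assume "\<exists>\<nu>. D i = {\<nu>} \<and> facet (W ! Suc i) \<nu> \<and> W ! i = W ! Suc i - {\<nu>}"
      then obtain \<nu> where nu: "D i = {\<nu>} \<and> facet (W ! Suc i) \<nu> \<and> W ! i = W ! Suc i - {\<nu>}" ..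
      have "D i = {\<nu>}" using nu by (rule conjunct1)
      moreover then have "s = \<nu>" using sD by simp
      ultimately have "D i = {s}" by simp
      then have "s \<in> critical W" unfolding critical_def
        by (intro CollectI exI[of _ i]) (use f1 in simp)
      then show ?thesis by blast
    next
      assume "\<exists>\<sigma> \<tau>. D i = {\<sigma>, \<tau>} \<and> free_pair (W ! Suc i) \<sigma> \<tau> \<and> W ! i = W ! Suc i - {\<sigma>, \<tau>}"
      then obtain \<sigma> \<tau> where st0: "D i = {\<sigma>, \<tau>} \<and> free_pair (W ! Suc i) \<sigma> \<tau> \<and> W ! i = W ! Suc i - {\<sigma>, \<tau>}"
        by (elim exE)
      have st1: "D i = {\<sigma>, \<tau>}" using st0 by (rule conjunct1)
      have st2: "\<sigma> \<subset> \<tau>" using conjunct1[OF conjunct2[OF st0]] unfolding free_pair_def by blast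
      have "s = \<sigma> \<or> s = \<tau>" using sD st1 by simp
      then show ?thesis
      proof
        assume "s = \<sigma>"
        then have "s \<in> lower_regular W" unfolding lower_regular_def
          by (intro CollectI exI[of _ i] exI[of _ \<tau>]) (use st1 st2 f1 in simp)
        then show ?thesis by blast
      next
        assume "s = \<tau>"
        then have "s \<in> upper_regular W" unfolding upper_regular_def
          by (intro CollectI exI[of _ i] exI[of _ \<sigma>]) (use st1 st2 f1 in simp)
        then show ?thesis by blast
      qed
    qed
  qed
qed

lemma disj1: "critical W \<inter> lower_regular W = {}"
proof -
  have False if "s \<in> critical W" "s \<in> lower_regular W" for s
  proof -
    have a: "D (idx s) = {s}" using crit_char(1)[OF that(1)] .
    have b: "D (idx s) = {s, mate s}" using lo_char(4)[OF that(2)] .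
    have "mate s \<noteq> s" using lo_char(2)[OF that(2)] unfolding free_pair_def by blast
    moreover have "mate s \<in> {s}" using a b by simp
    ultimately show False by simp
  qed
  then show ?thesis by blast
qed

lemma disj2: "critical W \<inter> upper_regular W = {}"
proof -
  have False if "s \<in> critical W" "s \<in> upper_regular W" for s
  proof -
    have a: "D (idx s) = {s}" using crit_char(1)[OF that(1)] .
    have b: "D (idx s) = {mate s, s}" using up_char(4)[OF that(2)] .
    have "mate s \<noteq> s" using up_char(2)[OF that(2)] unfolding free_pair_def by blast
    moreover have "mate s \<in> {s}" using a b by simp
    ultimately show False by simp
  qed
  then show ?thesis by blast
qed

lemma disj3: "lower_regular W \<inter> upper_regular W = {}"
proof -
  have False if "s \<in> lower_regular W" "s \<in> upper_regular W" for s
  proof -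
    have "s \<subset> mate s" using lo_char(2)[OF that(1)] unfolding free_pair_def by blast
    moreover have "mate s \<subset> s" using up_char(2)[OF that(2)] unfolding free_pair_def by blast
    ultimately show False by (meson less_asym)
  qed
  then show ?thesis by blast
qed

end


context mseq
begin

lemma hom_abs: "morse_abs K (bd1 K) card idx (critical W) (lower_regular W) (upper_regular W) mate"
proof (unfold_locales)
  show "finite K" using sc_finK[OF sc] .
  show "bd1 K s \<subseteq> K" for s unfolding bd1_def by blast
  show "card s = Suc (card t)" if "t \<in> bd1 K s" for s t using that unfolding bd1_def by simp
  show "lin (bd1 K) (bd1 K s) = {}" if "s \<in> K" for s using dd_bd[OF sc that] .
  show "K = critical W \<union> lower_regular W \<union> upper_regular W" by (rule part)
  show "critical W \<inter> lower_regular W = {}" by (rule disj1)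
  show "critical W \<inter> upper_regular W = {}" by (rule disj2)
  show "lower_regular W \<inter> upper_regular W = {}" by (rule disj3)
next
  fix \<tau> assume t: "\<tau> \<in> upper_regular W"
  note u = up_char[OF t]
  note uf = up_facts[OF t]
  have "mate \<tau> \<in> K" using uf(1) loK by blast
  moreover have "mate \<tau> \<subset> \<tau>" using u(2) unfolding free_pair_def by blast
  moreover have "card \<tau> = Suc (card (mate \<tau>))" using free_card[OF _ u(2)] u(1) by simp
  ultimately have "mate \<tau> \<in> bd1 K \<tau>" unfolding bd1_def by simp
  then show "mate \<tau> \<in> lower_regular W \<and> mate \<tau> \<in> bd1 K \<tau> \<and> mate (mate \<tau>) = \<tau>" using uf by simp
next
  fix \<sigma> assume s: "\<sigma> \<in> lower_regular W"
  show "mate \<sigma> \<in> upper_regular W \<and> mate (mate \<sigma>) = \<sigma>" using lo_char(5,6)[OF s] by simp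
next
  fix \<tau> \<rho> assume t: "\<tau> \<in> upper_regular W" and r: "\<rho> \<in> bd1 K \<tau>" and ne: "\<rho> \<noteq> mate \<tau>"
  note u = up_char[OF t]
  define i where "i = idx \<tau>"
  have im: "idx (mate \<tau>) = i" using up_facts(3)[OF t] i_def by simp
  have rK: "\<rho> \<in> K" and rt: "\<rho> \<subset> \<tau>" using r unfolding bd1_def by auto
  have rne: "\<rho> \<noteq> {}" using sc_ne[OF sc rK] .
  have tW: "\<tau> \<in> W ! Suc i" using u(2) unfolding free_pair_def i_def by blast
  have i1: "Suc i < L" using u(1) i_def by simp
  have "\<rho> \<in> W ! Suc i" using cplx[OF i1 tW _ rne] rt by blast
  moreover have "\<rho> \<noteq> \<tau>" using rt by blast
  ultimately have "\<rho> \<in> W ! i" using u(3) ne unfolding i_def by simp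
  then have "idx \<rho> < i" using mem_iff[OF rK, of i] i1 by simp
  then show "idx \<rho> < idx (mate \<tau>)" using im by simp
next
  fix \<tau> \<tau>' assume t: "\<tau> \<in> upper_regular W" and t': "\<tau>' \<in> upper_regular W" and m: "mate \<tau> \<in> bd1 K \<tau>'"
  note u = up_char[OF t]
  define i where "i = idx \<tau>"
  have i1: "Suc i < L" using u(1) i_def by simp
  have t'K: "\<tau>' \<in> K" using t' upK by blast
  have mt: "mate \<tau> \<subset> \<tau>'" using m unfolding bd1_def by blast
  show "\<tau>' = \<tau> \<or> idx \<tau> < idx \<tau>'"
  proof (rule ccontr)
    assume h: "\<not> (\<tau>' = \<tau> \<or> idx \<tau> < idx \<tau>')"
    then have "idx \<tau>' < Suc i" using i_def by simp
    then have "\<tau>' \<in> W ! Suc i" using mem_iff[OF t'K i1] by simp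
    then have "\<tau>' = mate \<tau> \<or> \<tau>' = \<tau>" using u(2) mt unfolding free_pair_def i_def by blast
    then show False using h mt by blast
  qed
qed

lemma coh_abs:
  assumes M: "\<forall>s\<in>K. card s \<le> M"
  shows "morse_abs K (cobd1 K) (\<lambda>s. M - card s) (\<lambda>s. L - idx s) (critical W) (upper_regular W) (lower_regular W) mate"
proof (unfold_locales)
  show "finite K" using sc_finK[OF sc] .
  show "cobd1 K s \<subseteq> K" for s unfolding cobd1_def by blast
  show "M - card s = Suc (M - card t)" if "t \<in> cobd1 K s" for s t
  proof -
    have "t \<in> K" "card t = card s + 1" using that unfolding cobd1_def by auto
    then show ?thesis using M by force
  qed
  show "lin (cobd1 K) (cobd1 K s) = {}" if "s \<in> K" for s using dd_cobd[OF sc that] .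
  show "K = critical W \<union> upper_regular W \<union> lower_regular W" using part by blast
  show "critical W \<inter> upper_regular W = {}" by (rule disj2)
  show "critical W \<inter> lower_regular W = {}" by (rule disj1)
  show "upper_regular W \<inter> lower_regular W = {}" using disj3 by blast
next
  fix \<sigma> assume s: "\<sigma> \<in> lower_regular W"
  note l = lo_char[OF s]
  have "mate \<sigma> \<in> K" using l(5) upK by blast
  moreover have "\<sigma> \<subset> mate \<sigma>" using l(2) unfolding free_pair_def by blast
  moreover have "card (mate \<sigma>) = Suc (card \<sigma>)" using free_card[OF _ l(2)] l(1) by simp
  ultimately have "mate \<sigma> \<in> cobd1 K \<sigma>" unfolding cobd1_def by simp
  then show "mate \<sigma> \<in> upper_regular W \<and> mate \<sigma> \<in> cobd1 K \<sigma> \<and> mate (mate \<sigma>) = \<sigma>" using l(5,6) by simp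
next
  fix \<tau> assume t: "\<tau> \<in> upper_regular W"
  show "mate \<tau> \<in> lower_regular W \<and> mate (mate \<tau>) = \<tau>" using up_facts(1,2)[OF t] by simp
next
  fix \<sigma> \<rho> assume s: "\<sigma> \<in> lower_regular W" and r: "\<rho> \<in> cobd1 K \<sigma>" and ne: "\<rho> \<noteq> mate \<sigma>"
  note l = lo_char[OF s]
  define i where "i = idx \<sigma>"
  have i1: "Suc i < L" using l(1) i_def by simp
  have rK: "\<rho> \<in> K" and sr: "\<sigma> \<subset> \<rho>" using r unfolding cobd1_def by auto
  have "i < idx \<rho>"
  proof (rule ccontr)
    assume "\<not> i < idx \<rho>"
    then have "\<rho> \<in> W ! Suc i" using mem_iff[OF rK i1] by simp
    then have "\<rho> = \<sigma> \<or> \<rho> = mate \<sigma>" using l(2) sr unfolding free_pair_def i_def by blast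
    then show False using ne sr by blast
  qed
  moreover have "Suc (idx \<rho>) < L" using idx_facts(1)[OF rK] .
  ultimately show "L - idx \<rho> < L - idx (mate \<sigma>)" using l(7) i_def by simp
next
  fix \<sigma> \<sigma>' assume s: "\<sigma> \<in> lower_regular W" and s': "\<sigma>' \<in> lower_regular W" and m: "mate \<sigma> \<in> cobd1 K \<sigma>'"
  note l = lo_char[OF s]
  define i where "i = idx \<sigma>"
  have i1: "Suc i < L" using l(1) i_def by simp
  have s'K: "\<sigma>' \<in> K" using s' loK by blast
  have sm: "\<sigma>' \<subset> mate \<sigma>" using m unfolding cobd1_def by blast
  have mW: "mate \<sigma> \<in> W ! Suc i" using l(2) unfolding free_pair_def i_def by blast
  have "\<sigma>' \<in> W ! Suc i" using cplx[OF i1 mW _ sc_ne[OF sc s'K]] sm by blast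
  show "\<sigma>' = \<sigma> \<or> L - idx \<sigma> < L - idx \<sigma>'"
  proof (cases "\<sigma>' = \<sigma>")
    case True then show ?thesis by simp
  next
    case False
    have "\<sigma>' \<noteq> mate \<sigma>" using sm by blast
    then have "\<sigma>' \<in> W ! i" using \<open>\<sigma>' \<in> W ! Suc i\<close> False l(3) unfolding i_def by simp
    then have "idx \<sigma>' < i" using mem_iff[OF s'K, of i] i1 by simp
    then show ?thesis using i1 i_def by arith
  qed
qed

lemma crit_Kcard: "critical W \<inter> Kcard K n = {c \<in> critical W. card c = n}"
  using critK unfolding Kcard_def by blast

lemma ref_eq: "is_ref K W = is_aref K (critical W) (upper_regular W) (bd1 K) card"
proof (rule ext)
  fix r
  have "(\<forall>\<sigma>\<in>K. r \<sigma> \<subseteq> critical W \<inter> Kcard K (card \<sigma>)) \<longleftrightarrow> (\<forall>s\<in>K. r s \<subseteq> {c\<in>critical W. card c = card s})"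
    by (simp add: crit_Kcard)
  then show "is_ref K W r = is_aref K (critical W) (upper_regular W) (bd1 K) card r"
    unfolding is_ref_def is_aref_def by simp
qed

lemma coref_eq:
  assumes M: "\<forall>s\<in>K. card s \<le> M"
  shows "is_coref K W = is_aref K (critical W) (lower_regular W) (cobd1 K) (\<lambda>s. M - card s)"
proof (rule ext)
  fix r
  have "{c\<in>critical W. M - card c = M - card s} = {c\<in>critical W. card c = card s}" if "s \<in> K" for s
  proof -
    have "(M - card c = M - card s) = (card c = card s)" if "c \<in> critical W" for c
    proof -
      have "card c \<le> M" "card s \<le> M" using M that critK \<open>s \<in> K\<close> by auto
      then show ?thesis by arith
    qed
    then show ?thesis by auto
  qed
  then have "(\<forall>\<sigma>\<in>K. r \<sigma> \<subseteq> critical W \<inter> Kcard K (card \<sigma>)) \<longleftrightarrow>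
      (\<forall>s\<in>K. r s \<subseteq> {c\<in>critical W. M - card c = M - card s})"
    by (simp add: crit_Kcard)
  then show "is_coref K W r = is_aref K (critical W) (lower_regular W) (cobd1 K) (\<lambda>s. M - card s) r"
    unfolding is_coref_def is_aref_def by simp
qed

lemma hom_iso: "vs_iso (homology K p) (crit_homology K W p)"
proof -
  interpret A: morse_abs K "bd1 K" card idx "critical W" "lower_regular W" "upper_regular W" mate
    by (rule hom_abs)
  have ref: "reference K W = (THE r. is_aref K (critical W) (upper_regular W) (bd1 K) card r)"
    unfolding reference_def ref_eq ..
  interpret R: morse_ref K "bd1 K" card idx "critical W" "lower_regular W" "upper_regular W" mate "reference K W"
    by unfold_locales (unfold ref, rule A.aref_THE)
  have bd: "bd K = lin (bd1 K)" by (rule ext) (simp add: bd_def)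
  have cb: "crit_bd K W = (\<lambda>c. lin (reference K W) (lin (bd1 K) c))"
    by (rule ext) (simp add: crit_bd_def bd_def)
  have k: "Kcard K n = {s\<in>K. card s = n}" for n by (simp add: Kcard_def)
  have "p + 2 = Suc (p + 1)" by simp
  then show ?thesis
    unfolding homology_def crit_homology_def bd cb crit_Kcard unfolding k
    using R.abs_iso[of "p + 1"] by simp
qed

lemma coh_iso: "vs_iso (cohomology K p) (crit_cohomology K W p)"
proof -
  define M where "M = p + 1 + card (\<Union>K)"
  have fU: "finite (\<Union>K)" using sc_finK[OF sc] sc_fin[OF sc] by blast
  have Mb: "\<forall>s\<in>K. card s \<le> M"
  proof
    fix s assume "s \<in> K"
    then have "card s \<le> card (\<Union>K)" using card_mono[OF fU] by blast
    then show "card s \<le> M" unfolding M_def by simp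
  qed
  interpret A: morse_abs K "cobd1 K" "\<lambda>s. M - card s" "\<lambda>s. L - idx s" "critical W" "upper_regular W" "lower_regular W" mate
    by (rule coh_abs[OF Mb])
  have ref: "coreference K W = (THE r. is_aref K (critical W) (lower_regular W) (cobd1 K) (\<lambda>s. M - card s) r)"
    unfolding coreference_def coref_eq[OF Mb] ..
  interpret R: morse_ref K "cobd1 K" "\<lambda>s. M - card s" "\<lambda>s. L - idx s" "critical W" "upper_regular W" "lower_regular W" mate "coreference K W"
    by unfold_locales (unfold ref, rule A.aref_THE)
  have cbd: "cobd K = lin (cobd1 K)" by (rule ext) (simp add: cobd_def)
  have cb: "crit_cobd K W = (\<lambda>c. lin (coreference K W) (lin (cobd1 K) c))"
    by (rule ext) (simp add: crit_cobd_def cobd_def)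
  have k1: "Kcard K (p + 1) = {s\<in>K. M - card s = M - (p + 1)}"
    using Mb unfolding Kcard_def M_def by force
  have k2: "Kcard K p = {s\<in>K. M - card s = Suc (M - (p + 1))}"
    using Mb unfolding Kcard_def M_def by force
  have c1: "critical W \<inter> Kcard K (p + 1) = {s\<in>critical W. M - card s = M - (p + 1)}"
    using critK k1 by blast
  have c2: "critical W \<inter> Kcard K p = {s\<in>critical W. M - card s = Suc (M - (p + 1))}"
    using critK k2 by blast
  show ?thesis
    unfolding cohomology_def crit_cohomology_def cbd cb c1 c2 unfolding k1 k2
    using R.abs_iso[of "M - (p + 1)"] by simp
qed

end

theorem theorem10:
  fixes K :: "'a set set" and W :: "'a set set list" and p :: nat
  assumes "simplicial_complex K" and "morse_seq K W"
  shows "vs_iso (homology K p) (crit_homology K W p) \<and>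
         vs_iso (cohomology K p) (crit_cohomology K W p)"
proof -
  interpret mseq K W using assms by unfold_locales
  show ?thesis using hom_iso coh_iso by blast
qed


end
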